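(* Let $G$ be a finite simple graph such that $Y_G\in\Gamma$. Then $G$ has no pair of disjoint edges. Furthermore, if $G$ is connected, then $G$ is either the triangle $C_3$ or the star graph $S_n$ for some $n\ge1$.
   Context: For a finite simple graph $G$, $X_G$ is its chromatic symmetric function (the sum over proper colorings $\kappa$ of $\prod_v x_{\kappa(v)}$), $\omega$ is the involution on symmetric functions with $\omega(p_r)=(-1)^{r-1}p_r$, and $Y_G=(X_G+\omega(X_G))/2$ is the near chromatic symmetric function. $\Gamma=\mathbb{Q}[p_1,p_3,p_5,\dots]$ where $p_r$ are power sums. Two edges $\{v_1,v_2\}$ and $\{v_3,v_4\}$ are disjoint if $v_1,v_2,v_3,v_4$ are all distinct. $C_3$ is the cycle on three vertices and $S_n$ is the tree on $n$ vertices with one internal vertex and $n-1$ leaves. *)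

theory Defs
  imports Complex_Main "HOL-Library.Poly_Mapping" "HOL-Library.FuncSet"
begin

text \<open>A monomial is a finitely supported exponent vector; a formal power series over
  the rationals is its coefficient function.\<close>

type_synonym monom = "nat \<Rightarrow>\<^sub>0 nat"
type_synonym fps_q = "monom \<Rightarrow> rat"

definition sf_one :: fps_q where
  "sf_one \<alpha> = (if \<alpha> = 0 then 1 else 0)"

definition sf_mult :: "fps_q \<Rightarrow> fps_q \<Rightarrow> fps_q" where
  "sf_mult f g \<alpha> = (\<Sum>\<beta>\<in>{\<beta>. \<forall>i. Poly_Mapping.lookup \<beta> i \<le> Poly_Mapping.lookup \<alpha> i}. f \<beta> * g (\<alpha> - \<beta>))"

definition psum :: "nat \<Rightarrow> fps_q" where
  "psum r \<alpha> = (if \<exists>i. \<alpha> = Poly_Mapping.single i r then 1 else 0)"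

definition pprod :: "nat list \<Rightarrow> fps_q" where
  "pprod lam = foldr sf_mult (map psum lam) sf_one"

text \<open>Sign of omega on p_lambda: omega(p_r) = (-1)^(r-1) p_r, extended multiplicatively.\<close>
definition omega_sign :: "nat list \<Rightarrow> rat" where
  "omega_sign lam = (\<Prod>r\<leftarrow>lam. (-1) ^ (r - 1))"

text \<open>The involution omega on symmetric functions: expand f in the power-sum basis
  (finite rational combination of p_lambda, lambda with positive parts) and apply
  omega linearly.  Well-defined on symmetric functions by linear independence of the p_lambda.\<close>
definition omega :: "fps_q \<Rightarrow> fps_q" where
  "omega f = (SOME g. \<exists>L c. finite L \<and> (\<forall>lam\<in>L. \<forall>r\<in>set lam. 0 < r) \<and>
      f = (\<lambda>\<alpha>. \<Sum>lam\<in>L. c lam * pprod lam \<alpha>) \<and>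
      g = (\<lambda>\<alpha>. \<Sum>lam\<in>L. c lam * omega_sign lam * pprod lam \<alpha>))"

definition in_Gamma :: "fps_q \<Rightarrow> bool" where
  "in_Gamma f \<longleftrightarrow> (\<exists>L c. finite L \<and> (\<forall>lam\<in>L. \<forall>r\<in>set lam. odd r) \<and>
      f = (\<lambda>\<alpha>. \<Sum>lam\<in>L. c lam * pprod lam \<alpha>))"

definition simple_graph :: "'a set \<Rightarrow> ('a \<Rightarrow> 'a \<Rightarrow> bool) \<Rightarrow> bool" where
  "simple_graph V E \<longleftrightarrow> finite V \<and> (\<forall>u v. E u v \<longrightarrow> u \<in> V \<and> v \<in> V) \<and>
      (\<forall>u v. E u v \<longrightarrow> E v u) \<and> (\<forall>u. \<not> E u u)"

definition proper_coloring :: "'a set \<Rightarrow> ('a \<Rightarrow> 'a \<Rightarrow> bool) \<Rightarrow> ('a \<Rightarrow> nat) \<Rightarrow> bool" where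
  "proper_coloring V E \<kappa> \<longleftrightarrow> \<kappa> \<in> V \<rightarrow>\<^sub>E (UNIV :: nat set) \<and>
      (\<forall>u v. E u v \<longrightarrow> \<kappa> u \<noteq> \<kappa> v)"

definition chrom_sym :: "'a set \<Rightarrow> ('a \<Rightarrow> 'a \<Rightarrow> bool) \<Rightarrow> fps_q" where
  "chrom_sym V E \<alpha> = of_nat (card {\<kappa>. proper_coloring V E \<kappa> \<and>
      (\<forall>i. Poly_Mapping.lookup \<alpha> i = card {v\<in>V. \<kappa> v = i})})"

definition near_chrom_sym :: "'a set \<Rightarrow> ('a \<Rightarrow> 'a \<Rightarrow> bool) \<Rightarrow> fps_q" where
  "near_chrom_sym V E = (\<lambda>\<alpha>. (chrom_sym V E \<alpha> + omega (chrom_sym V E) \<alpha>) / 2)"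

definition graph_connected :: "'a set \<Rightarrow> ('a \<Rightarrow> 'a \<Rightarrow> bool) \<Rightarrow> bool" where
  "graph_connected V E \<longleftrightarrow> V \<noteq> {} \<and> (\<forall>u\<in>V. \<forall>v\<in>V. E\<^sup>*\<^sup>* u v)"

definition disjoint_edges :: "('a \<Rightarrow> 'a \<Rightarrow> bool) \<Rightarrow> 'a \<Rightarrow> 'a \<Rightarrow> 'a \<Rightarrow> 'a \<Rightarrow> bool" where
  "disjoint_edges E v1 v2 v3 v4 \<longleftrightarrow> E v1 v2 \<and> E v3 v4 \<and> distinct [v1, v2, v3, v4]"

definition graph_iso :: "'a set \<Rightarrow> ('a \<Rightarrow> 'a \<Rightarrow> bool) \<Rightarrow> 'b set \<Rightarrow> ('b \<Rightarrow> 'b \<Rightarrow> bool) \<Rightarrow> bool" where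
  "graph_iso V E W F \<longleftrightarrow> (\<exists>f. bij_betw f V W \<and> (\<forall>u\<in>V. \<forall>v\<in>V. E u v \<longleftrightarrow> F (f u) (f v)))"

definition C3_edges :: "nat \<Rightarrow> nat \<Rightarrow> bool" where
  "C3_edges u v \<longleftrightarrow> u \<noteq> v \<and> u < 3 \<and> v < 3"

definition star_edges :: "nat \<Rightarrow> nat \<Rightarrow> nat \<Rightarrow> bool" where
  "star_edges n u v \<longleftrightarrow> u \<noteq> v \<and> u < n \<and> v < n \<and> (u = 0 \<or> v = 0)"

end

theory Submission
  imports Defs
begin


lemma finite_below: "finite {\<beta>::monom. \<forall>i. Poly_Mapping.lookup \<beta> i \<le> Poly_Mapping.lookup \<alpha> i}"
proof -
  let ?B = "{\<beta>::monom. \<forall>i. Poly_Mapping.lookup \<beta> i \<le> Poly_Mapping.lookup \<alpha> i}"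
  let ?h = "\<lambda>\<beta>::monom. restrict (Poly_Mapping.lookup \<beta>) (Poly_Mapping.keys \<alpha>)"
  have "inj_on ?h ?B"
  proof (rule inj_onI)
    fix x y assume x: "x \<in> ?B" and y: "y \<in> ?B" and e: "?h x = ?h y"
    show "x = y"
    proof (rule poly_mapping_eqI)
      fix k
      show "Poly_Mapping.lookup x k = Poly_Mapping.lookup y k"
      proof (cases "k \<in> Poly_Mapping.keys \<alpha>")
        case True then show ?thesis using fun_cong[OF e, of k] by simp
      next
        case False
        then have "Poly_Mapping.lookup \<alpha> k = 0" by (simp add: in_keys_iff)
        then show ?thesis using x y by (metis le_zero_eq mem_Collect_eq)
      qed
    qed
  qed
  moreover have "?h ` ?B \<subseteq> PiE (Poly_Mapping.keys \<alpha>) (\<lambda>i. {0..Poly_Mapping.lookup \<alpha> i})"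
    by auto
  moreover have "finite (PiE (Poly_Mapping.keys \<alpha>) (\<lambda>i. {0..Poly_Mapping.lookup \<alpha> i}))"
    by (intro finite_PiE) auto
  ultimately show ?thesis by (meson finite_imageD finite_subset)
qed

lemma psum_single: "0 < r \<Longrightarrow> psum r \<beta> = (if \<beta> \<in> range (\<lambda>i. Poly_Mapping.single i r) then 1 else 0)"
  by (auto simp: psum_def)

lemma single_inj: "0 < (r::nat) \<Longrightarrow> inj (\<lambda>i. Poly_Mapping.single i r)"
  by (rule injI) (metis lookup_single_eq lookup_single_not_eq less_numeral_extra(3))

lemma finite_ge: "0 < (r::nat) \<Longrightarrow> finite {i. r \<le> Poly_Mapping.lookup \<alpha> i}"
  by (rule finite_subset[of _ "Poly_Mapping.keys \<alpha>"]) (auto simp: in_keys_iff)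

lemma psum_mult:
  assumes r: "0 < r"
  shows "sf_mult (psum r) f \<alpha> = (\<Sum>i\<in>{i. r \<le> Poly_Mapping.lookup \<alpha> i}. f (\<alpha> - Poly_Mapping.single i r))"
proof -
  let ?B = "{\<beta>::monom. \<forall>i. Poly_Mapping.lookup \<beta> i \<le> Poly_Mapping.lookup \<alpha> i}"
  let ?S = "(\<lambda>i. Poly_Mapping.single i r) ` {i. r \<le> Poly_Mapping.lookup \<alpha> i}"
  have sub: "?S \<subseteq> ?B" by (auto simp: lookup_single when_def)
  have "sf_mult (psum r) f \<alpha> = (\<Sum>\<beta>\<in>?B. psum r \<beta> * f (\<alpha> - \<beta>))" by (simp add: sf_mult_def)
  also have "\<dots> = (\<Sum>\<beta>\<in>?S. psum r \<beta> * f (\<alpha> - \<beta>))"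
  proof (rule sum.mono_neutral_right[OF finite_below sub])
    show "\<forall>\<beta>\<in>?B - ?S. psum r \<beta> * f (\<alpha> - \<beta>) = 0"
    proof
      fix \<beta> assume b: "\<beta> \<in> ?B - ?S"
      have "\<beta> \<notin> range (\<lambda>i. Poly_Mapping.single i r)"
      proof
        assume "\<beta> \<in> range (\<lambda>i. Poly_Mapping.single i r)"
        then obtain i where "\<beta> = Poly_Mapping.single i r" by blast
        moreover have "Poly_Mapping.lookup \<beta> i \<le> Poly_Mapping.lookup \<alpha> i" using b by blast
        ultimately show False using b by auto
      qed
      then show "psum r \<beta> * f (\<alpha> - \<beta>) = 0" by (simp add: psum_single[OF r])
    qed
  qed
  also have "\<dots> = (\<Sum>i\<in>{i. r \<le> Poly_Mapping.lookup \<alpha> i}. psum r (Poly_Mapping.single i r) * f (\<alpha> - Poly_Mapping.single i r))"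
    by (rule sum.reindex[OF inj_on_subset[OF single_inj[OF r]], simplified])
  also have "\<dots> = (\<Sum>i\<in>{i. r \<le> Poly_Mapping.lookup \<alpha> i}. f (\<alpha> - Poly_Mapping.single i r))"
    by (rule sum.cong) (auto simp: psum_def)
  finally show ?thesis .
qed

lemma pprod_Cons: "pprod (r # lam) = sf_mult (psum r) (pprod lam)"
  by (simp add: pprod_def)


fun Gc :: "nat list \<Rightarrow> nat \<Rightarrow> nat \<Rightarrow> rat" where
  "Gc [] c2 c1 = (if c2 = 0 \<and> c1 = 0 then 1 else 0)"
| "Gc (r # l) c2 c1 = (if r = 1 then of_nat c2 * Gc l (c2 - 1) (c1 + 1) + of_nat c1 * Gc l c2 (c1 - 1)
     else if r = 2 then of_nat c2 * Gc l (c2 - 1) c1 else 0)"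

definition cnt :: "monom \<Rightarrow> nat \<Rightarrow> nat" where
  "cnt \<alpha> k = card {i. Poly_Mapping.lookup \<alpha> i = k}"

lemma lk: "Poly_Mapping.lookup (\<alpha> - Poly_Mapping.single i r) j =
    (if j = i then Poly_Mapping.lookup \<alpha> j - r else Poly_Mapping.lookup \<alpha> j)"
  by (simp add: lookup_minus lookup_single when_def)

lemma finite_eq: "0 < k \<Longrightarrow> finite {i. Poly_Mapping.lookup \<alpha> i = (k::nat)}"
  by (rule finite_subset[of _ "Poly_Mapping.keys \<alpha>"]) (auto simp: in_keys_iff)

lemma pprod_G:
  assumes "\<forall>r\<in>set lam. 0 < r" and "\<forall>i. Poly_Mapping.lookup \<alpha> i \<le> 2"
  shows "pprod lam \<alpha> = Gc lam (cnt \<alpha> 2) (cnt \<alpha> 1)"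
  using assms
proof (induction lam arbitrary: \<alpha>)
  case Nil
  have f1: "finite {i. Poly_Mapping.lookup \<alpha> i = 1}" "finite {i. Poly_Mapping.lookup \<alpha> i = 2}"
    by (auto intro: finite_eq)
  have "\<alpha> = 0 \<longleftrightarrow> (\<forall>i. Poly_Mapping.lookup \<alpha> i = 0)"
    by (metis lookup_zero poly_mapping_eqI)
  also have "\<dots> \<longleftrightarrow> cnt \<alpha> 2 = 0 \<and> cnt \<alpha> 1 = 0"
  proof -
    have "(\<forall>i. Poly_Mapping.lookup \<alpha> i = 0) \<longleftrightarrow>
        {i. Poly_Mapping.lookup \<alpha> i = 2} = {} \<and> {i. Poly_Mapping.lookup \<alpha> i = 1} = {}"
      using Nil.prems(2) by (auto, metis One_nat_def le_Suc_eq le_zero_eq numeral_2_eq_2)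
    then show ?thesis using f1 by (simp add: cnt_def)
  qed
  finally show ?case by (simp add: pprod_def sf_one_def)
next
  case (Cons r l)
  have r: "0 < r" and l: "\<forall>r\<in>set l. 0 < r" using Cons.prems by auto
  note a2 = Cons.prems(2)
  define A2 where "A2 = {i. Poly_Mapping.lookup \<alpha> i = 2}"
  define A1 where "A1 = {i. Poly_Mapping.lookup \<alpha> i = 1}"
  have fA: "finite A2" "finite A1" unfolding A1_def A2_def by (auto intro: finite_eq)
  have le2: "\<forall>j. Poly_Mapping.lookup (\<alpha> - Poly_Mapping.single i r) j \<le> 2" for i
    using a2 by (simp add: lk) (meson diff_le_self order_trans)
  have IH: "pprod l (\<alpha> - Poly_Mapping.single i r) =
      Gc l (cnt (\<alpha> - Poly_Mapping.single i r) 2) (cnt (\<alpha> - Poly_Mapping.single i r) 1)" for i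
    using Cons.IH[OF l le2] .
  have ps: "pprod (r # l) \<alpha> = (\<Sum>i\<in>{i. r \<le> Poly_Mapping.lookup \<alpha> i}. pprod l (\<alpha> - Poly_Mapping.single i r))"
    by (simp add: pprod_Cons psum_mult[OF r])
  have c2a: "cnt \<alpha> 2 = card A2" and c1a: "cnt \<alpha> 1 = card A1" by (simp_all add: cnt_def A1_def A2_def)
  consider "r = 1" | "r = 2" | "r \<ge> 3" using r by linarith
  then show ?case
  proof cases
    case 1
    have split: "{i. r \<le> Poly_Mapping.lookup \<alpha> i} = A2 \<union> A1"
      using a2 1 unfolding A1_def A2_def by (auto, metis One_nat_def le_Suc_eq le_antisym numeral_2_eq_2)
    have disj: "A2 \<inter> A1 = {}" unfolding A1_def A2_def by auto
    have s2: "i \<in> A2 \<Longrightarrow> {j. Poly_Mapping.lookup (\<alpha> - Poly_Mapping.single i r) j = 2} = A2 - {i}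
       \<and> {j. Poly_Mapping.lookup (\<alpha> - Poly_Mapping.single i r) j = 1} = insert i A1" for i
      using 1 unfolding A1_def A2_def by (auto simp: lk split: if_splits)
    have s1: "i \<in> A1 \<Longrightarrow> {j. Poly_Mapping.lookup (\<alpha> - Poly_Mapping.single i r) j = 2} = A2
       \<and> {j. Poly_Mapping.lookup (\<alpha> - Poly_Mapping.single i r) j = 1} = A1 - {i}" for i
      using 1 unfolding A1_def A2_def by (auto simp: lk split: if_splits)
    have "pprod (r # l) \<alpha> = (\<Sum>i\<in>A2. pprod l (\<alpha> - Poly_Mapping.single i r)) + (\<Sum>i\<in>A1. pprod l (\<alpha> - Poly_Mapping.single i r))"
      unfolding ps split using fA disj by (rule sum.union_disjoint)
    also have "(\<Sum>i\<in>A2. pprod l (\<alpha> - Poly_Mapping.single i r)) = (\<Sum>i\<in>A2. Gc l (card A2 - 1) (card A1 + 1))"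
    proof (rule sum.cong[OF refl])
      fix i assume i: "i \<in> A2"
      then have "i \<notin> A1" using disj by blast
      then show "pprod l (\<alpha> - Poly_Mapping.single i r) = Gc l (card A2 - 1) (card A1 + 1)"
        using IH[of i] s2[OF i] fA i by (simp add: cnt_def)
    qed
    also have "(\<Sum>i\<in>A1. pprod l (\<alpha> - Poly_Mapping.single i r)) = (\<Sum>i\<in>A1. Gc l (card A2) (card A1 - 1))"
    proof (rule sum.cong[OF refl])
      fix i assume i: "i \<in> A1"
      then show "pprod l (\<alpha> - Poly_Mapping.single i r) = Gc l (card A2) (card A1 - 1)"
        using IH[of i] s1[OF i] fA i by (simp add: cnt_def)
    qed
    finally show ?thesis using 1 c2a c1a by simp
  next
    case 2
    have split: "{i. r \<le> Poly_Mapping.lookup \<alpha> i} = A2"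
      using a2 2 unfolding A2_def by (auto intro: antisym)
    have s2: "i \<in> A2 \<Longrightarrow> {j. Poly_Mapping.lookup (\<alpha> - Poly_Mapping.single i r) j = 2} = A2 - {i}
       \<and> {j. Poly_Mapping.lookup (\<alpha> - Poly_Mapping.single i r) j = 1} = A1" for i
      using 2 unfolding A1_def A2_def by (auto simp: lk split: if_splits)
    have "pprod (r # l) \<alpha> = (\<Sum>i\<in>A2. Gc l (card A2 - 1) (card A1))"
      unfolding ps split
    proof (rule sum.cong[OF refl])
      fix i assume i: "i \<in> A2"
      then show "pprod l (\<alpha> - Poly_Mapping.single i r) = Gc l (card A2 - 1) (card A1)"
        using IH[of i] s2[OF i] fA i by (simp add: cnt_def)
    qed
    then show ?thesis using 2 c2a c1a by simp
  next
    case 3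
    have "{i. r \<le> Poly_Mapping.lookup \<alpha> i} = {}" 
    proof -
      have "\<not> r \<le> Poly_Mapping.lookup \<alpha> i" for i using a2 3 by (metis le_trans numeral_le_iff semiring_norm(69) semiring_norm(73) order_antisym numeral_3_eq_3 not_less_eq_eq numeral_2_eq_2)
      then show ?thesis by blast
    qed
    then show ?thesis using 3 ps by simp
  qed
qed


lemma G0: "set lam \<subseteq> {1,2} \<Longrightarrow> Gc lam 0 c1 =
  (if count_list lam 2 = 0 \<and> count_list lam 1 = c1 then fact c1 else 0)"
proof (induction lam arbitrary: c1)
  case Nil then show ?case by simp
next
  case (Cons r l)
  then have r: "r = 1 \<or> r = 2" and l: "set l \<subseteq> {1,2}" by auto
  show ?case
  proof (cases "r = 1")
    case True
    show ?thesis
    proof (cases c1)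
      case 0 then show ?thesis using True by simp
    next
      case (Suc m) then show ?thesis using True Cons.IH[OF l, of m] by (simp add: fact_Suc)
    qed
  next
    case False then show ?thesis using r by simp
  qed
qed

lemma G1: "set lam \<subseteq> {1,2} \<Longrightarrow> Gc lam 1 c1 =
  (if count_list lam 2 = 0 \<and> count_list lam 1 = c1 + 2 then fact (c1 + 2) / 2
   else if count_list lam 2 = 1 \<and> count_list lam 1 = c1 then fact c1 else 0)"
proof (induction lam arbitrary: c1)
  case Nil then show ?case by simp
next
  case (Cons r l)
  then have r: "r = 1 \<or> r = 2" and l: "set l \<subseteq> {1,2}" by auto
  note G0l = G0[OF l]
  show ?case
  proof (cases "r = 1")
    case True
    show ?thesis
    proof (cases c1)
      case 0 then show ?thesis using True G0l[of 1] by (simp add: fact_Suc)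
    next
      case (Suc m) then show ?thesis using True Cons.IH[OF l, of m] G0l[of "Suc (Suc m)"]
        by (auto simp add: fact_Suc field_simps)
    qed
  next
    case False then show ?thesis using r G0l[of c1] by auto
  qed
qed

lemma G2: "set lam \<subseteq> {1,2} \<Longrightarrow> Gc lam 2 c1 =
  (if count_list lam 2 = 0 \<and> count_list lam 1 = c1 + 4 then fact (c1 + 4) / 4
   else if count_list lam 2 = 1 \<and> count_list lam 1 = c1 + 2 then fact (c1 + 2)
   else if count_list lam 2 = 2 \<and> count_list lam 1 = c1 then 2 * fact c1 else 0)"
proof (induction lam arbitrary: c1)
  case Nil then show ?case by simp
next
  case (Cons r l)
  then have r: "r = 1 \<or> r = 2" and l: "set l \<subseteq> {1,2}" by auto
  note G1l = G1[OF l]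
  show ?case
  proof (cases "r = 1")
    case True
    show ?thesis
    proof (cases c1)
      case 0 then show ?thesis using True G1l[of 1] by (simp add: fact_Suc numeral_eq_Suc)
    next
      case (Suc m)
      have f: "fact (m + 5) = (fact (Suc (Suc (Suc (Suc (Suc m))))) :: rat)"
        "fact (m + 4) = (fact (Suc (Suc (Suc (Suc m)))) :: rat)"
        "fact (m + 3) = (fact (Suc (Suc (Suc m))) :: rat)"
        "fact (m + 2) = (fact (Suc (Suc m)) :: rat)"
        by (simp_all only: numeral_eq_Suc add_Suc_right add_0_right pred_numeral_simps BitM.simps Num.pred_numeral_simps numeral_One)
      show ?thesis using Suc True Cons.IH[OF l, of m] G1l[of "Suc (Suc m)"]
        by (auto simp add: f field_simps)
    qed
  next
    case False then show ?thesis using r G1l[of c1] by (auto simp: fact_Suc)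
  qed
qed


definition Acol :: "'a set \<Rightarrow> monom \<Rightarrow> ('a \<Rightarrow> nat) set" where
  "Acol V \<alpha> = {\<kappa> \<in> V \<rightarrow>\<^sub>E UNIV. \<forall>i. Poly_Mapping.lookup \<alpha> i = card {v\<in>V. \<kappa> v = i}}"

definition mg :: "'a set \<Rightarrow> nat \<Rightarrow> nat \<Rightarrow> ('a \<Rightarrow> nat) \<Rightarrow> ('a \<Rightarrow> nat)" where
  "mg V c' c \<kappa> = restrict (\<lambda>v. if \<kappa> v = c' then c else \<kappa> v) V"

lemma chrom_eq: "chrom_sym V E \<alpha> = of_nat (card {\<kappa>\<in>Acol V \<alpha>. \<forall>u v. E u v \<longrightarrow> \<kappa> u \<noteq> \<kappa> v})"
proof -
  have "{\<kappa>. proper_coloring V E \<kappa> \<and> (\<forall>i. Poly_Mapping.lookup \<alpha> i = card {v\<in>V. \<kappa> v = i})}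
     = {\<kappa>\<in>Acol V \<alpha>. \<forall>u v. E u v \<longrightarrow> \<kappa> u \<noteq> \<kappa> v}"
    unfolding Acol_def proper_coloring_def by auto
  then show ?thesis unfolding chrom_sym_def by simp
qed

lemma finite_Acol: assumes "finite V" shows "finite (Acol V \<alpha>)"
proof (rule finite_subset)
  show "Acol V \<alpha> \<subseteq> V \<rightarrow>\<^sub>E Poly_Mapping.keys \<alpha>"
  proof
    fix \<kappa> assume k: "\<kappa> \<in> Acol V \<alpha>"
    show "\<kappa> \<in> V \<rightarrow>\<^sub>E Poly_Mapping.keys \<alpha>"
    proof (rule PiE_I)
      fix v assume v: "v \<in> V"
      have "v \<in> {w\<in>V. \<kappa> w = \<kappa> v}" using v by simp
      then have "card {w\<in>V. \<kappa> w = \<kappa> v} \<noteq> 0" using assms by (auto simp: card_eq_0_iff)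
      then show "\<kappa> v \<in> Poly_Mapping.keys \<alpha>" using k by (simp add: Acol_def in_keys_iff)
    next
      fix v assume "v \<notin> V" then show "\<kappa> v = undefined" using k by (auto simp: Acol_def PiE_def extensional_def)
    qed
  qed
  show "finite (V \<rightarrow>\<^sub>E Poly_Mapping.keys \<alpha>)" using assms by (intro finite_PiE) auto
qed

lemma mg_class: "{v\<in>V. mg V c' c \<kappa> v = i} =
   (if i = c then {v\<in>V. \<kappa> v = c} \<union> {v\<in>V. \<kappa> v = c'} else if i = c' then {} else {v\<in>V. \<kappa> v = i})"
  if "c \<noteq> c'"
  using that by (auto simp: mg_def)

lemma merge_card:
  assumes fin: "finite V" and cc: "c \<noteq> c'"
    and a1: "Poly_Mapping.lookup \<alpha> c = 1" "Poly_Mapping.lookup \<alpha> c' = 1"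
    and a2: "Poly_Mapping.lookup \<alpha>' c = 2" "Poly_Mapping.lookup \<alpha>' c' = 0"
    and a3: "\<And>i. i \<noteq> c \<Longrightarrow> i \<noteq> c' \<Longrightarrow> Poly_Mapping.lookup \<alpha>' i = Poly_Mapping.lookup \<alpha> i"
  shows "card {\<kappa> \<in> Acol V \<alpha>. P (mg V c' c \<kappa>)} = 2 * card {\<kappa>' \<in> Acol V \<alpha>'. P \<kappa>'}"
proof -
  let ?S = "{\<kappa> \<in> Acol V \<alpha>. P (mg V c' c \<kappa>)}"
  let ?T = "{\<kappa>' \<in> Acol V \<alpha>'. P \<kappa>'}"
  let ?F = "\<lambda>t. {\<kappa> \<in> Acol V \<alpha>. mg V c' c \<kappa> = t}"
  have finc: "finite {v\<in>V. f v = i}" for f :: "'a \<Rightarrow> nat" and i using fin by simp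
  have mgA: "mg V c' c \<kappa> \<in> Acol V \<alpha>'" if k: "\<kappa> \<in> Acol V \<alpha>" for \<kappa>
  proof -
    have sz: "card {v\<in>V. \<kappa> v = i} = Poly_Mapping.lookup \<alpha> i" for i using k by (simp add: Acol_def)
    have "Poly_Mapping.lookup \<alpha>' i = card {v\<in>V. mg V c' c \<kappa> v = i}" for i
    proof -
      have "card ({v\<in>V. \<kappa> v = c} \<union> {v\<in>V. \<kappa> v = c'}) = card {v\<in>V. \<kappa> v = c} + card {v\<in>V. \<kappa> v = c'}"
        using cc fin by (intro card_Un_disjoint) auto
      then show ?thesis using mg_class[OF cc, of V \<kappa> i] sz a1 a2 a3 by auto
    qed
    moreover have "mg V c' c \<kappa> \<in> V \<rightarrow>\<^sub>E UNIV" by (simp add: mg_def)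
    ultimately show ?thesis by (simp add: Acol_def)
  qed
  have fib: "card (?F t) = 2" if t: "t \<in> Acol V \<alpha>'" for t
  proof -
    have tsz: "card {v\<in>V. t v = i} = Poly_Mapping.lookup \<alpha>' i" for i using t by (simp add: Acol_def)
    have tP: "t \<in> V \<rightarrow>\<^sub>E UNIV" using t by (simp add: Acol_def)
    obtain u w where uw: "u \<noteq> w" "{v\<in>V. t v = c} = {u, w}" using tsz[of c] a2 by (metis card_2_iff)
    have uV: "u \<in> V" "w \<in> V" "t u = c" "t w = c" using uw(2) by blast+
    have nc': "v \<in> V \<Longrightarrow> t v \<noteq> c'" for v using tsz[of c'] a2 finc[of t c'] by auto
    define k1 where "k1 = t(u := c')"
    define k2 where "k2 = t(w := c')"
    have inA: "k \<in> ?F t" if kdef: "k = t(x := c')" and x: "x \<in> {u, w}" for k x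
    proof -
      obtain y where y: "{x, y} = {u, w}" "x \<noteq> y" using x uw(1) by blast
      have kP: "k \<in> V \<rightarrow>\<^sub>E UNIV" using tP x uV kdef by (auto simp: PiE_def extensional_def)
      have "Poly_Mapping.lookup \<alpha> i = card {v\<in>V. k v = i}" for i
      proof -
        consider "i = c" | "i = c'" | "i \<noteq> c \<and> i \<noteq> c'" by blast
        then show ?thesis
        proof cases
          case 1
          have "{v\<in>V. k v = i} = {y}" using 1 uw(2) y kdef cc by (auto; blast)
          then show ?thesis using a1 1 by simp
        next
          case 2
          have "{v\<in>V. k v = i} = {x}" using 2 nc' kdef x uV by auto
          then show ?thesis using a1 2 by simp
        next
          case 3
          have "{v\<in>V. k v = i} = {v\<in>V. t v = i}" using 3 kdef x uV by auto
          then show ?thesis using tsz a3 3 by simp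
        qed
      qed
      then have "k \<in> Acol V \<alpha>" using kP by (simp add: Acol_def)
      moreover have "mg V c' c k = t"
      proof
        fix v show "mg V c' c k v = t v"
          using tP nc' kdef x uV cc by (auto simp: mg_def PiE_def extensional_def)
      qed
      ultimately show ?thesis by blast
    qed
    have "?F t = {k1, k2}"
    proof
      show "{k1, k2} \<subseteq> ?F t" using inA k1_def k2_def by blast
      show "?F t \<subseteq> {k1, k2}"
      proof
        fix k assume k: "k \<in> ?F t"
        then have kA: "k \<in> Acol V \<alpha>" and mk: "mg V c' c k = t" by auto
        have kP: "k \<in> V \<rightarrow>\<^sub>E UNIV" using kA by (simp add: Acol_def)
        have ksz: "card {v\<in>V. k v = i} = Poly_Mapping.lookup \<alpha> i" for i using kA by (simp add: Acol_def)
        have same: "v \<in> V \<Longrightarrow> v \<notin> {u, w} \<Longrightarrow> k v = t v" for v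
          using fun_cong[OF mk, of v] uw(2) by (auto simp: mg_def split: if_splits)
        have cw: "v \<in> V \<Longrightarrow> (k v = c \<or> k v = c') \<longleftrightarrow> v \<in> {u,w}" for v
          using fun_cong[OF mk, of v] uw(2) cc by (auto simp: mg_def split: if_splits)
        obtain z where z: "{v\<in>V. k v = c'} = {z}" using ksz[of c'] a1 by (metis card_1_singletonE)
        have zuw: "z \<in> {u, w}" using z cw by blast
        have oth: "v \<in> {u,w} \<Longrightarrow> v \<noteq> z \<Longrightarrow> k v = c" for v using z cw uV by blast
        show "k \<in> {k1, k2}"
        proof (cases "z = u")
          case True
          have "k = k1"
          proof
            fix v show "k v = k1 v"
              using True z oth same kP tP uw(1) uV unfolding k1_def
              by (cases "v \<in> V"; cases "v = u"; cases "v = w") (auto simp: PiE_def extensional_def)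
          qed
          then show ?thesis by simp
        next
          case False
          then have zw: "z = w" using zuw by simp
          have "k = k2"
          proof
            fix v show "k v = k2 v"
              using zw z oth same kP tP uw(1) uV unfolding k2_def
              by (cases "v \<in> V"; cases "v = u"; cases "v = w") (auto simp: PiE_def extensional_def)
          qed
          then show ?thesis by simp
        qed
      qed
    qed
    moreover have "k1 \<noteq> k2"
    proof
      assume "k1 = k2"
      then have "k1 u = k2 u" by simp
      then show False using uw(1) uV cc unfolding k1_def k2_def by auto
    qed
    ultimately show ?thesis by simp
  qed
  have Seq: "?S = (\<Union>t\<in>?T. ?F t)" using mgA by auto
  have "card ?S = (\<Sum>t\<in>?T. card (?F t))"
    unfolding Seq
    by (rule card_UN_disjoint) (use finite_Acol[OF fin] in auto)
  also have "\<dots> = (\<Sum>t\<in>?T. 2)" by (rule sum.cong) (auto simp: fib)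
  finally show ?thesis by simp
qed


definition al3 :: "nat \<Rightarrow> monom" where
  "al3 n = Abs_poly_mapping (\<lambda>i. if i < n then 1 else 0)"
definition al2 :: "nat \<Rightarrow> monom" where
  "al2 n = Abs_poly_mapping (\<lambda>i. if i = 0 then 2 else if i = 1 then 0 else if i < n then 1 else 0)"
definition al1 :: "nat \<Rightarrow> monom" where
  "al1 n = Abs_poly_mapping (\<lambda>i. if i = 0 \<or> i = 2 then 2 else if i = 1 \<or> i = 3 then 0 else if i < n then 1 else 0)"

lemma lk3: "Poly_Mapping.lookup (al3 n) = (\<lambda>i. if i < n then 1 else 0)"
  unfolding al3_def by (rule lookup_Abs_poly_mapping) (rule finite_subset[of _ "{..<n}"], auto)
lemma lk2: "Poly_Mapping.lookup (al2 n) = (\<lambda>i. if i = 0 then 2 else if i = 1 then 0 else if i < n then 1 else 0)"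
  unfolding al2_def by (rule lookup_Abs_poly_mapping) (rule finite_subset[of _ "{..<n+1}"], auto)
lemma lk1: "Poly_Mapping.lookup (al1 n) = (\<lambda>i. if i = 0 \<or> i = 2 then 2 else if i = 1 \<or> i = 3 then 0 else if i < n then 1 else 0)"
  unfolding al1_def by (rule lookup_Abs_poly_mapping) (rule finite_subset[of _ "{..<n+3}"], auto)

definition prp :: "('a \<Rightarrow> 'a \<Rightarrow> bool) \<Rightarrow> ('a \<Rightarrow> nat) \<Rightarrow> bool" where
  "prp E \<kappa> \<longleftrightarrow> (\<forall>u v. E u v \<longrightarrow> \<kappa> u \<noteq> \<kappa> v)"

definition eab :: "('a \<Rightarrow> 'a \<Rightarrow> bool) \<Rightarrow> nat \<Rightarrow> nat \<Rightarrow> ('a \<Rightarrow> nat) \<Rightarrow> bool" where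
  "eab E a b \<beta> \<longleftrightarrow> (\<exists>u v. E u v \<and> \<beta> u = a \<and> \<beta> v = b)"

lemma A3_inj: assumes "finite V" "\<beta> \<in> Acol V (al3 n)" "u \<in> V" "v \<in> V" "\<beta> u = \<beta> v"
  shows "u = v"
proof -
  have "card {w\<in>V. \<beta> w = \<beta> u} = (if \<beta> u < n then 1 else 0)" using assms(2) by (simp add: Acol_def lk3)
  then have "card {w\<in>V. \<beta> w = \<beta> u} \<le> 1" by simp
  moreover have "u \<in> {w\<in>V. \<beta> w = \<beta> u}" "v \<in> {w\<in>V. \<beta> w = \<beta> u}" using assms by auto
  moreover have "finite {w\<in>V. \<beta> w = \<beta> u}" using assms(1) by simp
  ultimately show ?thesis using card_le_Suc0_iff_eq[of "{w\<in>V. \<beta> w = \<beta> u}"] by (simp only: One_nat_def)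
qed

lemma X2: assumes fin: "finite V" and n: "2 \<le> n"
  shows "card {\<beta>\<in>Acol V (al3 n). P (mg V 1 0 \<beta>)} = 2 * card {\<kappa>\<in>Acol V (al2 n). P \<kappa>}"
  by (rule merge_card[OF fin]) (use n in \<open>auto simp: lk2 lk3\<close>)

lemma X1: assumes fin: "finite V" and n: "4 \<le> n"
  shows "card {\<kappa>\<in>Acol V (al2 n). P (mg V 3 2 \<kappa>)} = 2 * card {\<kappa>\<in>Acol V (al1 n). P \<kappa>}"
  by (rule merge_card[OF fin]) (use n in \<open>auto simp: lk2 lk1\<close>)

lemma prop_m1:
  assumes sg: "simple_graph V E" and b: "\<beta> \<in> Acol V (al3 n)"
  shows "prp E (mg V 1 0 \<beta>) \<longleftrightarrow> \<not> eab E 0 1 \<beta>"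
proof -
  have fin: "finite V" and inV: "\<And>x y. E x y \<Longrightarrow> x \<in> V \<and> y \<in> V"
    and sym: "\<And>x y. E x y \<Longrightarrow> E y x" and irr: "\<And>x. \<not> E x x"
    using sg unfolding simple_graph_def by blast+
  have inj: "E u v \<Longrightarrow> \<beta> u \<noteq> \<beta> v" for u v using A3_inj[OF fin b] inV irr by metis
  show ?thesis unfolding prp_def eab_def
  proof
    assume h: "\<forall>u v. E u v \<longrightarrow> mg V 1 0 \<beta> u \<noteq> mg V 1 0 \<beta> v"
    show "\<not> (\<exists>u v. E u v \<and> \<beta> u = 0 \<and> \<beta> v = 1)"
    proof (rule notI, elim exE conjE)
      fix u v assume "E u v" "\<beta> u = 0" "\<beta> v = 1"
      moreover then have "mg V 1 0 \<beta> u \<noteq> mg V 1 0 \<beta> v" using h by blast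
      ultimately show False using inV by (simp add: mg_def)
    qed
  next
    assume h: "\<not> (\<exists>u v. E u v \<and> \<beta> u = 0 \<and> \<beta> v = 1)"
    show "\<forall>u v. E u v \<longrightarrow> mg V 1 0 \<beta> u \<noteq> mg V 1 0 \<beta> v"
    proof (intro allI impI)
      fix u v assume e: "E u v"
      show "mg V 1 0 \<beta> u \<noteq> mg V 1 0 \<beta> v"
      proof -
        have "\<not>(\<beta> u = 0 \<and> \<beta> v = 1)" "\<not>(\<beta> v = 0 \<and> \<beta> u = 1)" using h e sym[OF e] by blast+
        then show ?thesis using inV[OF e] inj[OF e] by (auto simp: mg_def)
      qed
    qed
  qed
qed

lemma prop_m2:
  assumes sg: "simple_graph V E" and b: "\<beta> \<in> Acol V (al3 n)"
  shows "prp E (mg V 3 2 (mg V 1 0 \<beta>)) \<longleftrightarrow> \<not> eab E 0 1 \<beta> \<and> \<not> eab E 2 3 \<beta>"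
proof -
  have fin: "finite V" and inV: "\<And>x y. E x y \<Longrightarrow> x \<in> V \<and> y \<in> V"
    and sym: "\<And>x y. E x y \<Longrightarrow> E y x" and irr: "\<And>x. \<not> E x x"
    using sg unfolding simple_graph_def by blast+
  have inj: "E u v \<Longrightarrow> \<beta> u \<noteq> \<beta> v" for u v using A3_inj[OF fin b] inV irr by metis
  show ?thesis unfolding prp_def eab_def
  proof
    assume h: "\<forall>u v. E u v \<longrightarrow> mg V 3 2 (mg V 1 0 \<beta>) u \<noteq> mg V 3 2 (mg V 1 0 \<beta>) v"
    show "\<not> (\<exists>u v. E u v \<and> \<beta> u = 0 \<and> \<beta> v = 1) \<and> \<not> (\<exists>u v. E u v \<and> \<beta> u = 2 \<and> \<beta> v = 3)"
    proof (intro conjI; rule notI; elim exE conjE)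
      fix u v assume "E u v" "\<beta> u = 0" "\<beta> v = 1"
      moreover then have "mg V 3 2 (mg V 1 0 \<beta>) u \<noteq> mg V 3 2 (mg V 1 0 \<beta>) v" using h by blast
      ultimately show False using inV by (simp add: mg_def)
    next
      fix u v assume "E u v" "\<beta> u = 2" "\<beta> v = 3"
      moreover then have "mg V 3 2 (mg V 1 0 \<beta>) u \<noteq> mg V 3 2 (mg V 1 0 \<beta>) v" using h by blast
      ultimately show False using inV by (simp add: mg_def)
    qed
  next
    assume h: "\<not> (\<exists>u v. E u v \<and> \<beta> u = 0 \<and> \<beta> v = 1) \<and> \<not> (\<exists>u v. E u v \<and> \<beta> u = 2 \<and> \<beta> v = 3)"
    show "\<forall>u v. E u v \<longrightarrow> mg V 3 2 (mg V 1 0 \<beta>) u \<noteq> mg V 3 2 (mg V 1 0 \<beta>) v"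
    proof (intro allI impI)
      fix u v assume e: "E u v"
      show "mg V 3 2 (mg V 1 0 \<beta>) u \<noteq> mg V 3 2 (mg V 1 0 \<beta>) v"
      proof -
        have "\<not>(\<beta> u = 0 \<and> \<beta> v = 1)" "\<not>(\<beta> v = 0 \<and> \<beta> u = 1)"
          "\<not>(\<beta> u = 2 \<and> \<beta> v = 3)" "\<not>(\<beta> v = 2 \<and> \<beta> u = 3)" using h e sym[OF e] by blast+
        then show ?thesis using inV[OF e] inj[OF e] by (auto simp: mg_def)
      qed
    qed
  qed
qed


definition sw :: "nat \<Rightarrow> nat" where
  "sw c = (if c = 0 then 2 else if c = 1 then 3 else if c = 2 then 0 else if c = 3 then 1 else c)"

lemma sw_sw[simp]: "sw (sw c) = c" by (simp add: sw_def)

lemma sw_eq: "sw a = b \<longleftrightarrow> a = sw b" by (auto simp: sw_def)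

lemma sw_lt: "4 \<le> n \<Longrightarrow> sw i < n \<longleftrightarrow> i < n" by (auto simp: sw_def)

lemma sym_count:
  assumes sg: "simple_graph V E" and n: "4 \<le> n"
  shows "card {\<beta>\<in>Acol V (al3 n). \<not> eab E 0 1 \<beta>} = card {\<beta>\<in>Acol V (al3 n). \<not> eab E 2 3 \<beta>}"
proof -
  have inV: "\<And>x y. E x y \<Longrightarrow> x \<in> V \<and> y \<in> V" using sg unfolding simple_graph_def by blast
  define T where "T \<beta> = restrict (\<lambda>v. sw (\<beta> v)) V" for \<beta> :: "'a \<Rightarrow> nat"
  have TA: "T \<beta> \<in> Acol V (al3 n)" if b: "\<beta> \<in> Acol V (al3 n)" for \<beta>
  proof -
    have "{v\<in>V. T \<beta> v = i} = {v\<in>V. \<beta> v = sw i}" for i by (auto simp: T_def sw_eq)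
    moreover have "card {v\<in>V. \<beta> v = sw i} = (if i < n then 1 else 0)" for i
    proof -
      have "\<forall>i. (if i < n then 1 else 0) = card {v \<in> V. \<beta> v = i}" using b by (simp add: Acol_def lk3)
      then have "(if sw i < n then 1 else 0) = card {v \<in> V. \<beta> v = sw i}" by blast
      then show ?thesis using sw_lt[OF n, of i] by simp
    qed
    ultimately have "Poly_Mapping.lookup (al3 n) i = card {v\<in>V. T \<beta> v = i}" for i by (simp add: lk3)
    then show ?thesis by (simp add: Acol_def T_def)
  qed
  have TT: "T (T \<beta>) = \<beta>" if b: "\<beta> \<in> Acol V (al3 n)" for \<beta>
  proof
    fix v show "T (T \<beta>) v = \<beta> v" using b by (cases "v \<in> V") (auto simp: T_def Acol_def PiE_def extensional_def)
  qed
  have p1: "E u v \<Longrightarrow> (T \<beta> u = 2 \<and> T \<beta> v = 3) \<longleftrightarrow> (\<beta> u = 0 \<and> \<beta> v = 1)" for u v \<beta>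
    using inV[of u v] by (simp add: T_def sw_eq) (simp add: sw_def)
  have p2: "E u v \<Longrightarrow> (T \<beta> u = 0 \<and> T \<beta> v = 1) \<longleftrightarrow> (\<beta> u = 2 \<and> \<beta> v = 3)" for u v \<beta>
    using inV[of u v] by (simp add: T_def sw_eq) (simp add: sw_def)
  have e: "eab E 2 3 (T \<beta>) \<longleftrightarrow> eab E 0 1 \<beta>" for \<beta>
    unfolding eab_def using p1 by blast
  have e': "eab E 0 1 (T \<beta>) \<longleftrightarrow> eab E 2 3 \<beta>" for \<beta>
    unfolding eab_def using p2 by blast
  have "bij_betw T {\<beta>\<in>Acol V (al3 n). \<not> eab E 0 1 \<beta>} {\<beta>\<in>Acol V (al3 n). \<not> eab E 2 3 \<beta>}"
    by (rule bij_betw_byWitness[where f' = T]) (use TA TT e e' in blast)+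
  then show ?thesis by (rule bij_betw_same_card)
qed


lemma card_split: "finite A \<Longrightarrow> card A = card {x\<in>A. P x} + card {x\<in>A. \<not> P x}"
proof -
  assume f: "finite A"
  have "A = {x\<in>A. P x} \<union> {x\<in>A. \<not> P x}" by blast
  then have "card A = card ({x\<in>A. P x} \<union> {x\<in>A. \<not> P x})" by simp
  also have "\<dots> = card {x\<in>A. P x} + card {x\<in>A. \<not> P x}" using f by (intro card_Un_disjoint) auto
  finally show ?thesis .
qed

lemma card_or: "finite A \<Longrightarrow> card {x\<in>A. P x \<or> Q x} + card {x\<in>A. P x \<and> Q x} = card {x\<in>A. P x} + card {x\<in>A. Q x}"
proof -
  assume f: "finite A"
  have "{x\<in>A. P x \<or> Q x} = {x\<in>A. P x} \<union> {x\<in>A. Q x}" "{x\<in>A. P x \<and> Q x} = {x\<in>A. P x} \<inter> {x\<in>A. Q x}" by blast+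
  then show ?thesis using card_Un_Int[of "{x\<in>A. P x}" "{x\<in>A. Q x}"] f by simp
qed

lemma phiX:
  assumes sg: "simple_graph V E" and n: "card V = n" "4 \<le> n"
  shows "4 * int (card {\<kappa>\<in>Acol V (al1 n). prp E \<kappa>}) - 4 * int (card {\<kappa>\<in>Acol V (al2 n). prp E \<kappa>})
     + int (card {\<kappa>\<in>Acol V (al3 n). prp E \<kappa>}) = int (card {\<beta>\<in>Acol V (al3 n). eab E 0 1 \<beta> \<and> eab E 2 3 \<beta>})"
proof -
  have fin: "finite V" and inV: "\<And>x y. E x y \<Longrightarrow> x \<in> V \<and> y \<in> V" and irr: "\<And>x. \<not> E x x"
    using sg unfolding simple_graph_def by blast+
  let ?A = "Acol V (al3 n)"
  have fA: "finite ?A" using finite_Acol[OF fin] .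
  have c3: "{\<kappa>\<in>?A. prp E \<kappa>} = ?A"
  proof -
    have "prp E \<kappa>" if k: "\<kappa> \<in> ?A" for \<kappa>
      unfolding prp_def
    proof (intro allI impI notI)
      fix u v assume "E u v" "\<kappa> u = \<kappa> v"
      then have "u = v" using A3_inj[OF fin k] inV by blast
      then show False using \<open>E u v\<close> irr by simp
    qed
    then show ?thesis by blast
  qed
  have c2: "2 * card {\<kappa>\<in>Acol V (al2 n). prp E \<kappa>} = card {\<beta>\<in>?A. \<not> eab E 0 1 \<beta>}"
  proof -
    have "{\<beta>\<in>?A. prp E (mg V 1 0 \<beta>)} = {\<beta>\<in>?A. \<not> eab E 0 1 \<beta>}" using prop_m1[OF sg] by blast
    then show ?thesis using X2[OF fin, of n "prp E"] n by simp
  qed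
  have c1: "4 * card {\<kappa>\<in>Acol V (al1 n). prp E \<kappa>} = card {\<beta>\<in>?A. \<not> eab E 0 1 \<beta> \<and> \<not> eab E 2 3 \<beta>}"
  proof -
    have "{\<beta>\<in>?A. prp E (mg V 3 2 (mg V 1 0 \<beta>))} = {\<beta>\<in>?A. \<not> eab E 0 1 \<beta> \<and> \<not> eab E 2 3 \<beta>}"
      using prop_m2[OF sg] by blast
    moreover have "card {\<beta>\<in>?A. prp E (mg V 3 2 (mg V 1 0 \<beta>))} = 2 * card {\<kappa>\<in>Acol V (al2 n). prp E (mg V 3 2 \<kappa>)}"
      using X2[OF fin, of n "\<lambda>\<kappa>. prp E (mg V 3 2 \<kappa>)"] n by simp
    moreover have "card {\<kappa>\<in>Acol V (al2 n). prp E (mg V 3 2 \<kappa>)} = 2 * card {\<kappa>\<in>Acol V (al1 n). prp E \<kappa>}"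
      using X1[OF fin n(2)] .
    ultimately show ?thesis by simp
  qed
  have s1: "card ?A = card {\<beta>\<in>?A. eab E 0 1 \<beta>} + card {\<beta>\<in>?A. \<not> eab E 0 1 \<beta>}" by (rule card_split[OF fA])
  have s2: "card ?A = card {\<beta>\<in>?A. eab E 2 3 \<beta>} + card {\<beta>\<in>?A. \<not> eab E 2 3 \<beta>}" by (rule card_split[OF fA])
  have s3: "card ?A = card {\<beta>\<in>?A. eab E 0 1 \<beta> \<or> eab E 2 3 \<beta>} + card {\<beta>\<in>?A. \<not> eab E 0 1 \<beta> \<and> \<not> eab E 2 3 \<beta>}"
    using card_split[OF fA, of "\<lambda>\<beta>. eab E 0 1 \<beta> \<or> eab E 2 3 \<beta>"] by simp
  note s4 = card_or[OF fA, of "eab E 0 1" "eab E 2 3"]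
  have sy: "card {\<beta>\<in>?A. \<not> eab E 0 1 \<beta>} = card {\<beta>\<in>?A. \<not> eab E 2 3 \<beta>}" using sym_count[OF sg n(2)] .
  have c3': "card {\<kappa>\<in>?A. prp E \<kappa>} = card ?A" using c3 by simp
  show ?thesis using c1 c2 c3' s1 s2 s3 s4 sy by linarith
qed


lemma bij_A3:
  assumes "\<beta> \<in> V \<rightarrow>\<^sub>E UNIV" "bij_betw \<beta> V {..<n}"
  shows "\<beta> \<in> Acol V (al3 n)"
proof -
  have "Poly_Mapping.lookup (al3 n) i = card {v\<in>V. \<beta> v = i}" for i
  proof (cases "i < n")
    case True
    then obtain v where v: "v \<in> V" "\<beta> v = i" using assms(2) unfolding bij_betw_def by (metis imageE lessThan_iff)
    have "{w\<in>V. \<beta> w = i} = {v}" using v assms(2) unfolding bij_betw_def inj_on_def by auto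
    then show ?thesis using True by (simp add: lk3)
  next
    case False
    have "{w\<in>V. \<beta> w = i} = {}" using False assms(2) unfolding bij_betw_def by auto
    then have "card {w\<in>V. \<beta> w = i} = 0" by (metis card.empty)
    then show ?thesis using False by (simp add: lk3)
  qed
  then show ?thesis using assms(1) by (simp add: Acol_def)
qed

lemma exists_both:
  assumes sg: "simple_graph V E" and d: "disjoint_edges E v1 v2 v3 v4" and n: "card V = n"
  shows "\<exists>\<beta>\<in>Acol V (al3 n). eab E 0 1 \<beta> \<and> eab E 2 3 \<beta>"
proof -
  have fin: "finite V" and inV: "\<And>x y. E x y \<Longrightarrow> x \<in> V \<and> y \<in> V"
    using sg unfolding simple_graph_def by blast+
  have e: "E v1 v2" "E v3 v4" and ds: "distinct [v1, v2, v3, v4]" using d unfolding disjoint_edges_def by auto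
  have Q: "{v1, v2, v3, v4} \<subseteq> V" using inV e by auto
  have cQ: "card {v1, v2, v3, v4} = 4" using ds by simp
  have n4: "4 \<le> n" using card_mono[OF fin Q] cQ n by simp
  define W where "W = V - {v1, v2, v3, v4}"
  have cW: "card W = card {4..<n}" unfolding W_def using card_Diff_subset[OF _ Q] cQ n by simp
  obtain g where g: "bij_betw g W {4..<n}" using fin cW unfolding W_def
    by (metis finite_Diff finite_atLeastLessThan finite_same_card_bij)
  define f where "f v = (if v = v1 then 0 else if v = v2 then 1 else if v = v3 then 2 else if v = v4 then 3 else g v)" for v
  have b1: "bij_betw f {v1, v2, v3, v4} {0, 1, 2, 3}"
    using ds unfolding bij_betw_def inj_on_def f_def by auto
  have b2: "bij_betw f W {4..<n}"
    using g by (rule bij_betw_cong[THEN iffD1, rotated]) (auto simp: W_def f_def)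
  have "bij_betw f ({v1, v2, v3, v4} \<union> W) ({0, 1, 2, 3} \<union> {4..<n})"
    by (rule bij_betw_combine[OF b1 b2]) auto
  moreover have "{v1, v2, v3, v4} \<union> W = V" using Q unfolding W_def by auto
  moreover have "{0, 1, 2, 3} \<union> {4..<n} = {..<n}" using n4 by auto
  ultimately have bf: "bij_betw f V {..<n}" by simp
  define \<beta> where "\<beta> = restrict f V"
  have "bij_betw \<beta> V {..<n}" using bf by (rule bij_betw_cong[THEN iffD1, rotated]) (simp add: \<beta>_def)
  then have "\<beta> \<in> Acol V (al3 n)" by (intro bij_A3) (auto simp: \<beta>_def)
  moreover have "\<beta> v1 = 0" "\<beta> v2 = 1" "\<beta> v3 = 2" "\<beta> v4 = 3" using Q ds by (auto simp: \<beta>_def f_def)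
  then have "eab E 0 1 \<beta>" "eab E 2 3 \<beta>" unfolding eab_def using e by blast+
  ultimately show ?thesis by blast
qed


definition Cw :: "'a set \<Rightarrow> ('a \<Rightarrow> 'a \<Rightarrow> bool) \<Rightarrow> ('a \<Rightarrow> nat) \<Rightarrow> monom \<Rightarrow> ('a \<Rightarrow> nat) set" where
  "Cw V E w \<alpha> = {\<kappa> \<in> V \<rightarrow>\<^sub>E UNIV. (\<forall>u v. E u v \<longrightarrow> \<kappa> u \<noteq> \<kappa> v) \<and>
      (\<forall>i. Poly_Mapping.lookup \<alpha> i = (\<Sum>v\<in>{v\<in>V. \<kappa> v = i}. w v))}"

definition rep :: "fps_q \<Rightarrow> bool" where
  "rep f \<longleftrightarrow> (\<exists>L c. finite L \<and> (\<forall>lam\<in>L. \<forall>r\<in>set lam. 0 < r) \<and>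
      f = (\<lambda>\<alpha>. \<Sum>lam\<in>L. c lam * pprod lam \<alpha>))"

lemma rep_pprod: "\<forall>r\<in>set lam. 0 < r \<Longrightarrow> rep (pprod lam)"
  unfolding rep_def by (rule exI[of _ "{lam}"], rule exI[of _ "\<lambda>_. 1"]) auto

lemma rep_diff:
  assumes "rep f" "rep g" shows "rep (\<lambda>\<alpha>. f \<alpha> - g \<alpha>)"
proof -
  obtain L c where L: "finite L" "\<forall>lam\<in>L. \<forall>r\<in>set lam. 0 < r" "f = (\<lambda>\<alpha>. \<Sum>lam\<in>L. c lam * pprod lam \<alpha>)"
    using assms(1) unfolding rep_def by blast
  obtain M d where M: "finite M" "\<forall>lam\<in>M. \<forall>r\<in>set lam. 0 < r" "g = (\<lambda>\<alpha>. \<Sum>lam\<in>M. d lam * pprod lam \<alpha>)"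
    using assms(2) unfolding rep_def by blast
  define e where "e lam = (if lam \<in> L then c lam else 0) - (if lam \<in> M then d lam else 0)" for lam
  have "f \<alpha> = (\<Sum>lam\<in>L \<union> M. (if lam \<in> L then c lam else 0) * pprod lam \<alpha>)" for \<alpha>
    unfolding L(3) using L(1) M(1) by (intro sum.mono_neutral_cong_left) auto
  moreover have "g \<alpha> = (\<Sum>lam\<in>L \<union> M. (if lam \<in> M then d lam else 0) * pprod lam \<alpha>)" for \<alpha>
    unfolding M(3) using L(1) M(1) by (intro sum.mono_neutral_cong_left) auto
  ultimately have "(\<lambda>\<alpha>. f \<alpha> - g \<alpha>) = (\<lambda>\<alpha>. \<Sum>lam\<in>L \<union> M. e lam * pprod lam \<alpha>)"
    by (simp add: e_def sum_subtractf[symmetric] left_diff_distrib)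
  then show ?thesis unfolding rep_def using L(1,2) M(1,2) by blast
qed

lemma finite_Cw:
  assumes "finite V" "\<forall>v\<in>V. 0 < w v" shows "finite (Cw V E w \<alpha>)"
proof (rule finite_subset)
  show "Cw V E w \<alpha> \<subseteq> V \<rightarrow>\<^sub>E Poly_Mapping.keys \<alpha>"
  proof
    fix \<kappa> assume k: "\<kappa> \<in> Cw V E w \<alpha>"
    show "\<kappa> \<in> V \<rightarrow>\<^sub>E Poly_Mapping.keys \<alpha>"
    proof (rule PiE_I)
      fix v assume v: "v \<in> V"
      have "w v \<le> (\<Sum>u\<in>{u\<in>V. \<kappa> u = \<kappa> v}. w u)"
        using v assms(1) by (intro member_le_sum) auto
      then have "(\<Sum>u\<in>{u\<in>V. \<kappa> u = \<kappa> v}. w u) \<noteq> 0" using assms(2) v by auto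
      then show "\<kappa> v \<in> Poly_Mapping.keys \<alpha>" using k by (simp add: Cw_def in_keys_iff)
    next
      fix v assume "v \<notin> V" then show "\<kappa> v = undefined" using k by (auto simp: Cw_def PiE_def extensional_def)
    qed
  qed
  show "finite (V \<rightarrow>\<^sub>E Poly_Mapping.keys \<alpha>)" using assms by (intro finite_PiE) auto
qed


lemma sum_ins_class:
  assumes "x \<notin> V" "finite V" "\<kappa> x = i"
  shows "(\<Sum>v\<in>{v\<in>insert x V. \<kappa> v = j}. w v) = (if j = i then w x else 0) + (\<Sum>v\<in>{v\<in>V. \<kappa> v = j}. (w v :: nat))"
proof (cases "j = i")
  case True
  then have "{v\<in>insert x V. \<kappa> v = j} = insert x {v\<in>V. \<kappa> v = j}" using assms by auto
  then show ?thesis using True assms by simp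
next
  case False
  then have "{v\<in>insert x V. \<kappa> v = j} = {v\<in>V. \<kappa> v = j}" using assms by auto
  then show ?thesis using False by simp
qed

lemma Cw_ins:
  assumes x: "x \<notin> V" and fin: "finite V" and pos: "\<forall>v\<in>insert x V. 0 < w v"
  shows "card (Cw (insert x V) (\<lambda>_ _. False) w \<alpha>) =
    (\<Sum>i\<in>{i. w x \<le> Poly_Mapping.lookup \<alpha> i}. card (Cw V (\<lambda>_ _. False) w (\<alpha> - Poly_Mapping.single i (w x))))"
proof -
  let ?N = "\<lambda>_ _ :: 'a. False"
  let ?I = "{i. w x \<le> Poly_Mapping.lookup \<alpha> i}"
  let ?S = "\<lambda>i. {\<kappa>\<in>Cw (insert x V) ?N w \<alpha>. \<kappa> x = i}"
  have wx: "0 < w x" using pos by simp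
  have fI: "finite ?I" using finite_ge[OF wx] .
  have finC: "finite (Cw (insert x V) ?N w \<alpha>)" using fin pos by (intro finite_Cw) auto
  have cov: "Cw (insert x V) ?N w \<alpha> = (\<Union>i\<in>?I. ?S i)"
  proof
    show "Cw (insert x V) ?N w \<alpha> \<subseteq> (\<Union>i\<in>?I. ?S i)"
    proof
      fix \<kappa> assume k: "\<kappa> \<in> Cw (insert x V) ?N w \<alpha>"
      have "w x \<le> (\<Sum>u\<in>{u\<in>insert x V. \<kappa> u = \<kappa> x}. w u)"
        using fin by (intro member_le_sum) auto
      also have "\<dots> = Poly_Mapping.lookup \<alpha> (\<kappa> x)" using k by (simp add: Cw_def)
      finally show "\<kappa> \<in> (\<Union>i\<in>?I. ?S i)" using k by auto
    qed
  qed auto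
  have "card (Cw (insert x V) ?N w \<alpha>) = card (\<Union>i\<in>?I. ?S i)" by (rule arg_cong[OF cov])
  also have "\<dots> = (\<Sum>i\<in>?I. card (?S i))"
  proof (rule card_UN_disjoint[OF fI])
    show "\<forall>i\<in>?I. finite (?S i)" using finC by auto
    show "\<forall>i\<in>?I. \<forall>j\<in>?I. i \<noteq> j \<longrightarrow> ?S i \<inter> ?S j = {}" by blast
  qed
  also have "\<dots> = (\<Sum>i\<in>?I. card (Cw V ?N w (\<alpha> - Poly_Mapping.single i (w x))))"
  proof (rule sum.cong[OF refl])
    fix i assume i: "i \<in> ?I"
    have eqv: "(\<forall>j. Poly_Mapping.lookup \<alpha> j = (\<Sum>v\<in>{v\<in>insert x V. \<kappa> v = j}. w v)) \<longleftrightarrow>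
        (\<forall>j. Poly_Mapping.lookup (\<alpha> - Poly_Mapping.single i (w x)) j = (\<Sum>v\<in>{v\<in>V. \<kappa> v = j}. w v))"
      if kx: "\<kappa> x = i" for \<kappa>
    proof -
      note sc = sum_ins_class[where w = w and x = x and V = V and \<kappa> = \<kappa> and i = i, OF x fin kx]
      have wi: "w x \<le> Poly_Mapping.lookup \<alpha> i" using i by simp
      show ?thesis
      proof
        assume h: "\<forall>j. Poly_Mapping.lookup \<alpha> j = (\<Sum>v\<in>{v\<in>insert x V. \<kappa> v = j}. w v)"
        show "\<forall>j. Poly_Mapping.lookup (\<alpha> - Poly_Mapping.single i (w x)) j = (\<Sum>v\<in>{v\<in>V. \<kappa> v = j}. w v)"
        proof
          fix j show "Poly_Mapping.lookup (\<alpha> - Poly_Mapping.single i (w x)) j = (\<Sum>v\<in>{v\<in>V. \<kappa> v = j}. w v)"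
            using h[rule_format, of j] sc[of j] by (cases "j = i") (simp_all add: lk)
        qed
      next
        assume h: "\<forall>j. Poly_Mapping.lookup (\<alpha> - Poly_Mapping.single i (w x)) j = (\<Sum>v\<in>{v\<in>V. \<kappa> v = j}. w v)"
        show "\<forall>j. Poly_Mapping.lookup \<alpha> j = (\<Sum>v\<in>{v\<in>insert x V. \<kappa> v = j}. w v)"
        proof
          fix j show "Poly_Mapping.lookup \<alpha> j = (\<Sum>v\<in>{v\<in>insert x V. \<kappa> v = j}. w v)"
            using h[rule_format, of j] sc[of j] wi by (cases "j = i") (simp_all add: lk)
        qed
      qed
    qed
    have resV: "{v\<in>V. restrict \<kappa> V v = j} = {v\<in>V. \<kappa> v = j}" for \<kappa> :: "'a \<Rightarrow> nat" and j by auto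
    have updV: "{v\<in>V. (\<kappa>(x := i)) v = j} = {v\<in>V. \<kappa> v = j}" for \<kappa> :: "'a \<Rightarrow> nat" and j using x by auto
    show "card (?S i) = card (Cw V ?N w (\<alpha> - Poly_Mapping.single i (w x)))"
    proof (rule bij_betw_same_card[of "\<lambda>\<kappa>. restrict \<kappa> V"], rule bij_betw_byWitness[where f' = "\<lambda>\<kappa>. \<kappa>(x := i)"])
      show "\<forall>a\<in>?S i. (restrict a V)(x := i) = a"
      proof
        fix a assume a: "a \<in> ?S i"
        show "(restrict a V)(x := i) = a"
        proof
          fix v show "((restrict a V)(x := i)) v = a v" using a by (auto simp: Cw_def PiE_def extensional_def)
        qed
      qed
      show "\<forall>a\<in>Cw V ?N w (\<alpha> - Poly_Mapping.single i (w x)). restrict (a(x := i)) V = a"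
      proof
        fix a assume a: "a \<in> Cw V ?N w (\<alpha> - Poly_Mapping.single i (w x))"
        show "restrict (a(x := i)) V = a"
        proof
          fix v show "restrict (a(x := i)) V v = a v" using a x by (auto simp: Cw_def PiE_def extensional_def)
        qed
      qed
      show "(\<lambda>\<kappa>. restrict \<kappa> V) ` ?S i \<subseteq> Cw V ?N w (\<alpha> - Poly_Mapping.single i (w x))"
      proof
        fix b assume "b \<in> (\<lambda>\<kappa>. restrict \<kappa> V) ` ?S i"
        then obtain a where a: "a \<in> ?S i" "b = restrict a V" by blast
        have "\<forall>j. Poly_Mapping.lookup (\<alpha> - Poly_Mapping.single i (w x)) j = (\<Sum>v\<in>{v\<in>V. a v = j}. w v)"
          using a eqv[of a] by (simp add: Cw_def)
        moreover have "{v\<in>V. b v = j} = {v\<in>V. a v = j}" for j using a(2) by auto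
        moreover have "b \<in> V \<rightarrow>\<^sub>E UNIV" using a(2) by simp
        ultimately show "b \<in> Cw V ?N w (\<alpha> - Poly_Mapping.single i (w x))" unfolding Cw_def by simp
      qed
      show "(\<lambda>\<kappa>. \<kappa>(x := i)) ` Cw V ?N w (\<alpha> - Poly_Mapping.single i (w x)) \<subseteq> ?S i"
      proof
        fix b assume "b \<in> (\<lambda>\<kappa>. \<kappa>(x := i)) ` Cw V ?N w (\<alpha> - Poly_Mapping.single i (w x))"
        then obtain a where a: "a \<in> Cw V ?N w (\<alpha> - Poly_Mapping.single i (w x))" "b = a(x := i)" by blast
        have bx: "b x = i" using a by simp
        have bP: "b \<in> insert x V \<rightarrow>\<^sub>E UNIV" using a x by (auto simp: Cw_def PiE_def extensional_def)
        have "\<forall>j. Poly_Mapping.lookup (\<alpha> - Poly_Mapping.single i (w x)) j = (\<Sum>v\<in>{v\<in>V. b v = j}. w v)"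
          using a updV by (simp add: Cw_def)
        then have "\<forall>j. Poly_Mapping.lookup \<alpha> j = (\<Sum>v\<in>{v\<in>insert x V. b v = j}. w v)" using eqv[of b, OF bx] by blast
        then show "b \<in> ?S i" using bP bx by (simp add: Cw_def)
      qed
    qed
  qed
  finally show ?thesis .
qed


lemma Cw_empty: "Cw {} (\<lambda>_ _. False) w \<alpha> = (if \<alpha> = 0 then {\<lambda>_. undefined} else {})"
proof -
  have "\<alpha> = 0 \<longleftrightarrow> (\<forall>i. Poly_Mapping.lookup \<alpha> i = 0)" by (metis lookup_zero poly_mapping_eqI)
  then show ?thesis unfolding Cw_def by auto
qed

lemma edgeless:
  assumes "distinct xs" "\<forall>v\<in>set xs. 0 < w v"
  shows "of_nat (card (Cw (set xs) (\<lambda>_ _. False) w \<alpha>)) = pprod (map w xs) \<alpha>"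
  using assms
proof (induction xs arbitrary: \<alpha>)
  case Nil
  show ?case by (simp add: Cw_empty pprod_def sf_one_def)
next
  case (Cons x xs)
  have x: "x \<notin> set xs" and d: "distinct xs" and p: "\<forall>v\<in>set xs. 0 < w v" and wx: "0 < w x"
    using Cons.prems by auto
  have "of_nat (card (Cw (set (x # xs)) (\<lambda>_ _. False) w \<alpha>)) =
    (\<Sum>i\<in>{i. w x \<le> Poly_Mapping.lookup \<alpha> i}. (of_nat (card (Cw (set xs) (\<lambda>_ _. False) w (\<alpha> - Poly_Mapping.single i (w x)))) :: rat))"
    using Cw_ins[of x "set xs" w \<alpha>] x Cons.prems(2) by simp
  also have "\<dots> = (\<Sum>i\<in>{i. w x \<le> Poly_Mapping.lookup \<alpha> i}. pprod (map w xs) (\<alpha> - Poly_Mapping.single i (w x)))"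
    using Cons.IH[OF d p] by simp
  also have "\<dots> = pprod (map w (x # xs)) \<alpha>"
    by (simp add: pprod_Cons psum_mult[OF wx])
  finally show ?case .
qed


lemma sum_upd_in: "finite S \<Longrightarrow> u \<in> S \<Longrightarrow> sum (w(u := w u + a)) S = sum w S + (a::nat)"
proof -
  assume f: "finite S" and u: "u \<in> S"
  have "sum (w(u := w u + a)) S = (w(u := w u + a)) u + sum (w(u := w u + a)) (S - {u})"
    using f u by (rule sum.remove)
  also have "sum (w(u := w u + a)) (S - {u}) = sum w (S - {u})" by (rule sum.cong) auto
  also have "sum w S = w u + sum w (S - {u})" using f u by (rule sum.remove)
  ultimately show ?thesis by simp
qed

lemma sum_upd_out: "u \<notin> S \<Longrightarrow> sum (w(u := b)) S = sum w S"
  by (rule sum.cong) auto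

lemma delcon:
  assumes fin: "finite V" and inV: "\<forall>x y. E x y \<longrightarrow> x \<in> V \<and> y \<in> V" and irr: "\<forall>x. \<not> E x x"
    and e: "E u v" and pos: "\<forall>v\<in>V. 0 < w v"
  shows "card (Cw V (\<lambda>x y. E x y \<and> \<not> (x = u \<and> y = v) \<and> \<not> (x = v \<and> y = u)) w \<alpha>) =
     card (Cw V E w \<alpha>) +
     card (Cw (V - {v}) (\<lambda>x y. x \<in> V - {v} \<and> y \<in> V - {v} \<and> x \<noteq> y \<and>
        (E x y \<or> (x = u \<and> (E v y \<or> E y v)) \<or> (y = u \<and> (E x v \<or> E v x)))) (w(u := w u + w v)) \<alpha>)"
proof -
  define E' where "E' = (\<lambda>x y. E x y \<and> \<not> (x = u \<and> y = v) \<and> \<not> (x = v \<and> y = u))"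
  define V'' where "V'' = V - {v}"
  define E'' where "E'' = (\<lambda>x y. x \<in> V'' \<and> y \<in> V'' \<and> x \<noteq> y \<and>
        (E x y \<or> (x = u \<and> (E v y \<or> E y v)) \<or> (y = u \<and> (E x v \<or> E v x))))"
  define w'' where "w'' = w(u := w u + w v)"
  have uv: "u \<in> V" "v \<in> V" "u \<noteq> v" using inV irr e by metis+
  have uV'': "u \<in> V''" "v \<notin> V''" using uv by (auto simp: V''_def)
  have finC: "finite (Cw V E' w \<alpha>)" if "\<forall>v\<in>V. 0 < w v" using finite_Cw[OF fin that] .
  have split: "Cw V E' w \<alpha> = Cw V E w \<alpha> \<union> {\<kappa>\<in>Cw V E' w \<alpha>. \<kappa> u = \<kappa> v}"
  proof
    show "Cw V E' w \<alpha> \<subseteq> Cw V E w \<alpha> \<union> {\<kappa>\<in>Cw V E' w \<alpha>. \<kappa> u = \<kappa> v}"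
    proof
      fix \<kappa> assume k: "\<kappa> \<in> Cw V E' w \<alpha>"
      show "\<kappa> \<in> Cw V E w \<alpha> \<union> {\<kappa>\<in>Cw V E' w \<alpha>. \<kappa> u = \<kappa> v}"
      proof (cases "\<kappa> u = \<kappa> v")
        case True then show ?thesis using k by blast
      next
        case False
        have "\<forall>x y. E x y \<longrightarrow> \<kappa> x \<noteq> \<kappa> y"
        proof (intro allI impI)
          fix x y assume "E x y"
          then show "\<kappa> x \<noteq> \<kappa> y" using k False unfolding Cw_def E'_def by (cases "x = u \<and> y = v \<or> x = v \<and> y = u") auto
        qed
        then show ?thesis using k unfolding Cw_def by blast
      qed
    qed
    show "Cw V E w \<alpha> \<union> {\<kappa>\<in>Cw V E' w \<alpha>. \<kappa> u = \<kappa> v} \<subseteq> Cw V E' w \<alpha>"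
      unfolding Cw_def E'_def by blast
  qed
  have disj: "Cw V E w \<alpha> \<inter> {\<kappa>\<in>Cw V E' w \<alpha>. \<kappa> u = \<kappa> v} = {}"
    using e unfolding Cw_def by blast
  have szeq: "(\<Sum>x\<in>{x\<in>V''. \<kappa> x = j}. w'' x) = (\<Sum>x\<in>{x\<in>V. \<kappa> x = j}. w x)" if kuv: "\<kappa> u = \<kappa> v" for \<kappa> j
  proof (cases "\<kappa> u = j")
    case True
    have "{x\<in>V. \<kappa> x = j} = insert v {x\<in>V''. \<kappa> x = j}" using True kuv uv by (auto simp: V''_def)
    then have "(\<Sum>x\<in>{x\<in>V. \<kappa> x = j}. w x) = w v + (\<Sum>x\<in>{x\<in>V''. \<kappa> x = j}. w x)"
      using uV'' fin by (simp add: V''_def)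
    moreover have "(\<Sum>x\<in>{x\<in>V''. \<kappa> x = j}. w'' x) = (\<Sum>x\<in>{x\<in>V''. \<kappa> x = j}. w x) + w v"
      unfolding w''_def using fin uV'' True by (intro sum_upd_in) (auto simp: V''_def)
    ultimately show ?thesis by simp
  next
    case False
    have "{x\<in>V. \<kappa> x = j} = {x\<in>V''. \<kappa> x = j}" using False kuv uv by (auto simp: V''_def)
    moreover have "(\<Sum>x\<in>{x\<in>V''. \<kappa> x = j}. w'' x) = (\<Sum>x\<in>{x\<in>V''. \<kappa> x = j}. w x)"
      unfolding w''_def using False by (intro sum_upd_out) auto
    ultimately show ?thesis by simp
  qed
  have bij: "card {\<kappa>\<in>Cw V E' w \<alpha>. \<kappa> u = \<kappa> v} = card (Cw V'' E'' w'' \<alpha>)"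
  proof (rule bij_betw_same_card[of "\<lambda>\<kappa>. restrict \<kappa> V''"], rule bij_betw_byWitness[where f' = "\<lambda>\<kappa>. \<kappa>(v := \<kappa> u)"])
    show "\<forall>a\<in>{\<kappa>\<in>Cw V E' w \<alpha>. \<kappa> u = \<kappa> v}. (restrict a V'')(v := restrict a V'' u) = a"
    proof
      fix a assume a: "a \<in> {\<kappa>\<in>Cw V E' w \<alpha>. \<kappa> u = \<kappa> v}"
      show "(restrict a V'')(v := restrict a V'' u) = a"
      proof
        fix x show "((restrict a V'')(v := restrict a V'' u)) x = a x"
          using a uV'' by (auto simp: Cw_def PiE_def extensional_def V''_def)
      qed
    qed
    show "\<forall>a\<in>Cw V'' E'' w'' \<alpha>. restrict (a(v := a u)) V'' = a"
    proof
      fix a assume a: "a \<in> Cw V'' E'' w'' \<alpha>"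
      show "restrict (a(v := a u)) V'' = a"
      proof
        fix x show "restrict (a(v := a u)) V'' x = a x"
          using a uV'' by (auto simp: Cw_def PiE_def extensional_def)
      qed
    qed
    show "(\<lambda>\<kappa>. restrict \<kappa> V'') ` {\<kappa>\<in>Cw V E' w \<alpha>. \<kappa> u = \<kappa> v} \<subseteq> Cw V'' E'' w'' \<alpha>"
    proof
      fix b assume "b \<in> (\<lambda>\<kappa>. restrict \<kappa> V'') ` {\<kappa>\<in>Cw V E' w \<alpha>. \<kappa> u = \<kappa> v}"
      then obtain a where a: "a \<in> Cw V E' w \<alpha>" "a u = a v" "b = restrict a V''" by blast
      have ap: "\<forall>x y. E' x y \<longrightarrow> a x \<noteq> a y" using a(1) by (simp add: Cw_def)
      have bV: "x \<in> V'' \<Longrightarrow> b x = a x" for x using a(3) by simp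
      have "b \<in> V'' \<rightarrow>\<^sub>E UNIV" using a(3) by simp
      moreover have "\<forall>x y. E'' x y \<longrightarrow> b x \<noteq> b y"
      proof (intro allI impI)
        fix x y assume h: "E'' x y"
        then have xy: "x \<in> V''" "y \<in> V''" "x \<noteq> y" by (auto simp: E''_def)
        then have xv: "x \<noteq> v" "y \<noteq> v" using uV'' by auto
        have "a x \<noteq> a y"
          using h xy xv ap a(2) unfolding E''_def E'_def by metis
        then show "b x \<noteq> b y" using bV xy by simp
      qed
      moreover have "{x\<in>V''. b x = j} = {x\<in>V''. a x = j}" for j using bV by auto
      moreover have "\<forall>j. Poly_Mapping.lookup \<alpha> j = (\<Sum>x\<in>{x\<in>V''. a x = j}. w'' x)"
        using a(1) szeq[OF a(2)] by (simp add: Cw_def)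
      ultimately show "b \<in> Cw V'' E'' w'' \<alpha>" unfolding Cw_def by simp
    qed
    show "(\<lambda>\<kappa>. \<kappa>(v := \<kappa> u)) ` Cw V'' E'' w'' \<alpha> \<subseteq> {\<kappa>\<in>Cw V E' w \<alpha>. \<kappa> u = \<kappa> v}"
    proof
      fix b assume "b \<in> (\<lambda>\<kappa>. \<kappa>(v := \<kappa> u)) ` Cw V'' E'' w'' \<alpha>"
      then obtain a where a: "a \<in> Cw V'' E'' w'' \<alpha>" "b = a(v := a u)" by blast
      have ap: "\<forall>x y. E'' x y \<longrightarrow> a x \<noteq> a y" using a(1) by (simp add: Cw_def)
      have buv: "b u = b v" using a(2) uv by simp
      have bV: "x \<noteq> v \<Longrightarrow> b x = a x" for x using a(2) by simp
      have bV2: "x \<in> V'' \<Longrightarrow> b x = a x" for x using bV uV'' by metis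
      have "b \<in> V \<rightarrow>\<^sub>E UNIV" using a uv by (auto simp: Cw_def PiE_def extensional_def V''_def)
      moreover have "\<forall>x y. E' x y \<longrightarrow> b x \<noteq> b y"
      proof (intro allI impI)
        fix x y assume h: "E' x y"
        then have Exy: "E x y" and nuv: "\<not> (x = u \<and> y = v)" "\<not> (x = v \<and> y = u)" by (auto simp: E'_def)
        have xyV: "x \<in> V" "y \<in> V" "x \<noteq> y" using inV irr Exy by metis+
        consider "x = v" | "y = v" | "x \<noteq> v \<and> y \<noteq> v" using xyV by blast
        then show "b x \<noteq> b y"
        proof cases
          case 1
          then have "y \<noteq> u" "y \<noteq> v" using nuv xyV by auto
          then have "E'' u y" using Exy 1 xyV uV'' by (auto simp: E''_def V''_def)
          then show ?thesis using ap 1 buv bV \<open>y \<noteq> v\<close> by (metis a(2) fun_upd_same)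
        next
          case 2
          then have "x \<noteq> u" "x \<noteq> v" using nuv xyV by auto
          then have "E'' x u" using Exy 2 xyV uV'' by (auto simp: E''_def V''_def)
          then show ?thesis using ap 2 bV \<open>x \<noteq> v\<close> by (metis a(2) fun_upd_same)
        next
          case 3
          then have "E'' x y" using Exy xyV by (auto simp: E''_def V''_def)
          then show ?thesis using ap 3 bV by metis
        qed
      qed
      moreover have "{x\<in>V''. b x = j} = {x\<in>V''. a x = j}" for j using bV2 by auto
      moreover have "\<forall>j. Poly_Mapping.lookup \<alpha> j = (\<Sum>x\<in>{x\<in>V''. a x = j}. w'' x)"
        using a(1) by (simp add: Cw_def)
      ultimately have "b \<in> Cw V E' w \<alpha>" unfolding Cw_def using szeq[OF buv] by simp
      then show "b \<in> {\<kappa>\<in>Cw V E' w \<alpha>. \<kappa> u = \<kappa> v}" using buv by blast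
    qed
  qed
  have "card (Cw V E' w \<alpha>) = card (Cw V E w \<alpha>) + card {\<kappa>\<in>Cw V E' w \<alpha>. \<kappa> u = \<kappa> v}"
  proof -
    note True = pos
    have "card (Cw V E' w \<alpha>) = card (Cw V E w \<alpha> \<union> {\<kappa>\<in>Cw V E' w \<alpha>. \<kappa> u = \<kappa> v})" by (rule arg_cong[OF split])
    also have "\<dots> = card (Cw V E w \<alpha>) + card {\<kappa>\<in>Cw V E' w \<alpha>. \<kappa> u = \<kappa> v}"
      using finC[OF True] split disj by (intro card_Un_disjoint) (auto intro: finite_subset)
    finally show ?thesis .
  qed
  then show ?thesis using bij unfolding E'_def V''_def E''_def w''_def by simp
qed


lemma rep_Cw_aux:
  "\<forall>V (E :: 'a \<Rightarrow> 'a \<Rightarrow> bool) w. card V = n \<longrightarrow> finite V \<longrightarrow> (\<forall>v\<in>V. 0 < w v) \<longrightarrow>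
     (\<forall>x y. E x y \<longrightarrow> x \<in> V \<and> y \<in> V) \<longrightarrow> (\<forall>x. \<not> E x x) \<longrightarrow>
     rep (\<lambda>\<alpha>. of_nat (card (Cw V E w \<alpha>)))"
proof (induction n rule: less_induct)
  case (less n)
  note outerIH = less.IH
  show ?case
  proof (intro allI impI)
    fix V :: "'a set" and E0 :: "'a \<Rightarrow> 'a \<Rightarrow> bool" and w :: "'a \<Rightarrow> nat"
    assume cV: "card V = n" and fin: "finite V" and pos: "\<forall>v\<in>V. 0 < w v"
      and inV0: "\<forall>x y. E0 x y \<longrightarrow> x \<in> V \<and> y \<in> V" and irr0: "\<forall>x. \<not> E0 x x"
    have inner: "\<forall>E. card {(x, y). E x y} = m \<longrightarrow> (\<forall>x y. E x y \<longrightarrow> x \<in> V \<and> y \<in> V) \<longrightarrow> (\<forall>x. \<not> E x x) \<longrightarrow>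
        rep (\<lambda>\<alpha>. of_nat (card (Cw V E w \<alpha>)))" for m
    proof (induction m rule: less_induct)
      case (less m)
      show ?case
      proof (intro allI impI)
        fix E :: "'a \<Rightarrow> 'a \<Rightarrow> bool"
        assume cE: "card {(x, y). E x y} = m" and inV: "\<forall>x y. E x y \<longrightarrow> x \<in> V \<and> y \<in> V" and irr: "\<forall>x. \<not> E x x"
        have finE: "finite {(x, y). E x y}"
          by (rule finite_subset[of _ "V \<times> V"]) (use inV fin in auto)
        show "rep (\<lambda>\<alpha>. of_nat (card (Cw V E w \<alpha>)))"
        proof (cases "\<exists>u v. E u v")
          case False
          then have E: "E = (\<lambda>_ _. False)" by blast
          obtain xs where xs: "set xs = V" "distinct xs" using finite_distinct_list[OF fin] by blast
          have "(\<lambda>\<alpha>. of_nat (card (Cw V E w \<alpha>))) = pprod (map w xs)"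
            using edgeless[OF xs(2)] pos xs(1) E by auto
          moreover have "\<forall>r\<in>set (map w xs). 0 < r" using pos xs(1) by auto
          ultimately show ?thesis using rep_pprod by simp
        next
          case True
          then obtain u v where e: "E u v" by blast
          define E' where "E' = (\<lambda>x y. E x y \<and> \<not> (x = u \<and> y = v) \<and> \<not> (x = v \<and> y = u))"
          define E'' where "E'' = (\<lambda>x y. x \<in> V - {v} \<and> y \<in> V - {v} \<and> x \<noteq> y \<and>
            (E x y \<or> (x = u \<and> (E v y \<or> E y v)) \<or> (y = u \<and> (E x v \<or> E v x))))"
          define w'' where "w'' = w(u := w u + w v)"
          have uv: "u \<in> V" "v \<in> V" "u \<noteq> v" using inV irr e by metis+
          have dc: "card (Cw V E' w \<alpha>) = card (Cw V E w \<alpha>) + card (Cw (V - {v}) E'' w'' \<alpha>)" for \<alpha>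
            unfolding E'_def E''_def w''_def using delcon[OF fin inV irr e pos] .
          have "{(x, y). E' x y} \<subset> {(x, y). E x y}" using e unfolding E'_def by auto
          then have "card {(x, y). E' x y} < m" using cE finE by (metis psubset_card_mono)
          moreover have "\<forall>x y. E' x y \<longrightarrow> x \<in> V \<and> y \<in> V" "\<forall>x. \<not> E' x x" using inV irr by (auto simp: E'_def)
          ultimately have r1: "rep (\<lambda>\<alpha>. of_nat (card (Cw V E' w \<alpha>)))" using less.IH by blast
          have "card (V - {v}) < n" using card_Diff1_less[OF fin uv(2)] cV by simp
          moreover have "finite (V - {v})" "\<forall>x\<in>V - {v}. 0 < w'' x" using fin pos by (auto simp: w''_def)
          moreover have "\<forall>x y. E'' x y \<longrightarrow> x \<in> V - {v} \<and> y \<in> V - {v}" "\<forall>x. \<not> E'' x x" by (auto simp: E''_def)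
          ultimately have r2: "rep (\<lambda>\<alpha>. of_nat (card (Cw (V - {v}) E'' w'' \<alpha>)))" using outerIH by blast
          have "(\<lambda>\<alpha>. of_nat (card (Cw V E w \<alpha>)) :: rat) =
            (\<lambda>\<alpha>. of_nat (card (Cw V E' w \<alpha>)) - of_nat (card (Cw (V - {v}) E'' w'' \<alpha>)))"
            using dc by (simp add: fun_eq_iff)
          then show ?thesis using rep_diff[OF r1 r2] by simp
        qed
      qed
    qed
    show "rep (\<lambda>\<alpha>. of_nat (card (Cw V E0 w \<alpha>)))" using inner inV0 irr0 by blast
  qed
qed

lemma rep_chrom:
  assumes "simple_graph V E" shows "rep (chrom_sym V E)"
proof -
  have fin: "finite V" and inV: "\<forall>x y. E x y \<longrightarrow> x \<in> V \<and> y \<in> V" and irr: "\<forall>x. \<not> E x x"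
    using assms unfolding simple_graph_def by blast+
  have "chrom_sym V E = (\<lambda>\<alpha>. of_nat (card (Cw V E (\<lambda>_. 1) \<alpha>)))"
    unfolding chrom_sym_def Cw_def proper_coloring_def by (auto simp: fun_eq_iff)
  moreover have "rep (\<lambda>\<alpha>. of_nat (card (Cw V E (\<lambda>_. 1) \<alpha>)))"
    using rep_Cw_aux[of "card V", rule_format, where V=V and E=E and w="\<lambda>_. 1"] fin inV irr by simp
  ultimately show ?thesis by simp
qed


lemma meet:
  assumes sg: "simple_graph V E" and nd: "\<nexists>v1 v2 v3 v4. disjoint_edges E v1 v2 v3 v4"
    and "E a b" "E c d"
  shows "a = c \<or> a = d \<or> b = c \<or> b = d"
proof (rule ccontr)
  assume "\<not> ?thesis"
  moreover have "a \<noteq> b" "c \<noteq> d" using sg assms(3,4) unfolding simple_graph_def by metis+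
  ultimately have "disjoint_edges E a b c d" using assms(3,4) unfolding disjoint_edges_def by auto
  thus False using nd by blast
qed

lemma star_iso:
  assumes fin: "finite V" and c: "c \<in> V"
    and E: "\<And>x y. E x y \<longleftrightarrow> x \<in> V \<and> y \<in> V \<and> x \<noteq> y \<and> (x = c \<or> y = c)"
  shows "graph_iso V E {0..<card V} (star_edges (card V))"
proof -
  let ?n = "card V"
  have "card (V - {c}) = card {1..<?n}" using fin c by simp
  then obtain g where g: "bij_betw g (V - {c}) {1..<?n}"
    using fin by (metis finite_Diff finite_atLeastLessThan finite_same_card_bij)
  define f where "f x = (if x = c then 0 else g x)" for x
  have "bij_betw f (V - {c}) {1..<?n}" using g by (rule bij_betw_cong[THEN iffD1, rotated]) (simp add: f_def)
  moreover have "f c = 0" by (simp add: f_def)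
  ultimately have bf: "bij_betw f ((V - {c}) \<union> {c}) ({1..<?n} \<union> {0})"
    using notIn_Un_bij_betw[of c "V - {c}" f "{1..<?n}"] by auto
  have "(V - {c}) \<union> {c} = V" using c by auto
  moreover have "{1..<?n} \<union> {0} = {0..<?n}" using c fin card_gt_0_iff by fastforce
  ultimately have bf': "bij_betw f V {0..<?n}" using bf by simp
  have f0: "x \<in> V \<Longrightarrow> f x = 0 \<longleftrightarrow> x = c" for x
  proof -
    assume "x \<in> V"
    then have "x \<noteq> c \<Longrightarrow> g x \<in> {1..<?n}" using g by (auto simp: bij_betw_def)
    then show ?thesis by (auto simp: f_def)
  qed
  show ?thesis unfolding graph_iso_def
  proof (intro exI conjI ballI)
    show "bij_betw f V {0..<?n}" by fact
    fix u v assume uv: "u \<in> V" "v \<in> V"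
    have "f u < ?n" "f v < ?n" using bf' uv by (auto simp: bij_betw_def)
    moreover have "f u = f v \<longleftrightarrow> u = v" using bf' uv by (auto simp: bij_betw_def inj_on_def)
    ultimately show "E u v \<longleftrightarrow> star_edges ?n (f u) (f v)"
      using f0 uv E unfolding star_edges_def by auto
  qed
qed

lemma tri_iso:
  assumes V: "V = {a, b, c}" and d: "distinct [a, b, c]"
    and E: "\<And>x y. E x y \<longleftrightarrow> x \<in> V \<and> y \<in> V \<and> x \<noteq> y"
  shows "graph_iso V E {0::nat, 1, 2} C3_edges"
proof -
  define f where "f x = (if x = a then 0 else if x = b then 1 else (2::nat))" for x
  have "bij_betw f V {0, 1, 2}" using d unfolding V bij_betw_def inj_on_def f_def by auto
  moreover have "\<forall>u\<in>V. \<forall>v\<in>V. E u v \<longleftrightarrow> C3_edges (f u) (f v)"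
    using d unfolding V E C3_edges_def f_def by auto
  ultimately show ?thesis unfolding graph_iso_def by blast
qed

lemma graph_part:
  assumes sg: "simple_graph V E" and nd: "\<nexists>v1 v2 v3 v4. disjoint_edges E v1 v2 v3 v4"
    and con: "graph_connected V E"
  shows "graph_iso V E {0::nat, 1, 2} C3_edges \<or>
         (\<exists>n::nat. n \<ge> 1 \<and> graph_iso V E {0..<n} (star_edges n))"
proof -
  have fin: "finite V" and inV: "\<And>x y. E x y \<Longrightarrow> x \<in> V \<and> y \<in> V"
    and sym: "\<And>x y. E x y \<Longrightarrow> E y x" and irr: "\<And>x. \<not> E x x"
    using sg unfolding simple_graph_def by blast+
  have ne: "V \<noteq> {}" and reach: "\<And>x y. x \<in> V \<Longrightarrow> y \<in> V \<Longrightarrow> E\<^sup>*\<^sup>* x y"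
    using con unfolding graph_connected_def by blast+
  note mt = meet[OF sg nd]
  have star: ?thesis if c: "c \<in> V" and cen: "\<And>x y. E x y \<Longrightarrow> x = c \<or> y = c" for c
  proof -
    have nb: "E\<^sup>*\<^sup>* c y \<Longrightarrow> y = c \<or> E c y" for y
    proof (induction rule: rtranclp_induct)
      case base then show ?case by simp
    next
      case (step y z)
      then show ?case using cen irr by metis
    qed
    have "E x y \<longleftrightarrow> x \<in> V \<and> y \<in> V \<and> x \<noteq> y \<and> (x = c \<or> y = c)" for x y
      using nb[OF reach[OF c]] cen inV irr sym by metis
    then have "graph_iso V E {0..<card V} (star_edges (card V))"
      using star_iso[OF fin c] by blast
    moreover have "card V \<ge> 1" using fin ne by (simp add: Suc_le_eq card_gt_0_iff)
    ultimately show ?thesis by blast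
  qed
  show ?thesis
  proof (cases "\<exists>u v. E u v")
    case False
    obtain c where c: "c \<in> V" using ne by blast
    show ?thesis using star[OF c] False by blast
  next
    case True
    then obtain u v where uv: "E u v" by blast
    show ?thesis
    proof (cases "\<exists>w. E u w \<and> E v w")
      case True
      then obtain w where w: "E u w" "E v w" by blast
      have d: "distinct [u, v, w]" using uv w irr by auto
      have inT: "x \<in> {u, v, w} \<and> y \<in> {u, v, w}" if "E x y" for x y
      proof -
        have "x \<in> {u, v, w}"
        proof (rule ccontr)
          assume "x \<notin> {u, v, w}"
          then show False using mt[OF that uv] mt[OF that w(1)] mt[OF that w(2)] d by auto
        qed
        moreover have "y \<in> {u, v, w}"
        proof (rule ccontr)
          assume "y \<notin> {u, v, w}"
          then show False using mt[OF that uv] mt[OF that w(1)] mt[OF that w(2)] d by auto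
        qed
        ultimately show ?thesis by blast
      qed
      have rT: "E\<^sup>*\<^sup>* u y \<Longrightarrow> y \<in> {u, v, w}" for y
        by (induction rule: rtranclp_induct) (use inT in auto)
      have uV: "u \<in> V" using inV uv by blast
      have VT: "V = {u, v, w}" using rT reach[OF uV] inV uv w by blast
      have "E x y \<longleftrightarrow> x \<in> V \<and> y \<in> V \<and> x \<noteq> y" for x y
      proof
        assume "E x y" then show "x \<in> V \<and> y \<in> V \<and> x \<noteq> y" using inV irr by metis
      next
        assume "x \<in> V \<and> y \<in> V \<and> x \<noteq> y"
        then show "E x y" unfolding VT using uv w sym by auto
      qed
      then show ?thesis using tri_iso[OF VT d] by blast
    next
      case notri: False
      show ?thesis
      proof (cases "\<forall>x y. E x y \<longrightarrow> x = u \<or> y = u")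
        case True
        then show ?thesis using star inV uv by blast
      next
        case False
        then obtain x y where xy: "E x y" "x \<noteq> u" "y \<noteq> u" by blast
        obtain z where z: "E v z" "z \<noteq> u"
          using mt[OF xy(1) uv] xy sym by metis
        have "\<forall>a b. E a b \<longrightarrow> a = v \<or> b = v"
        proof (intro allI impI, rule ccontr)
          fix a b assume ab: "E a b" "\<not> (a = v \<or> b = v)"
          have "(a = u \<and> b = z) \<or> (a = z \<and> b = u)"
            using mt[OF ab(1) uv] mt[OF ab(1) z(1)] ab z irr by metis
          then have "E u z" using ab sym by metis
          then show False using notri z sym by blast
        qed
        then show ?thesis using star inV uv by blast
      qed
    qed
  qed
qed


lemma Gc_out: "\<not> set lam \<subseteq> {1,2} \<Longrightarrow> Gc lam c2 c1 = 0"
proof (induction lam arbitrary: c2 c1)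
  case Nil then show ?case by simp
next
  case (Cons r l)
  show ?case
  proof (cases "r = 1 \<or> r = 2")
    case True
    then have "\<not> set l \<subseteq> {1,2}" using Cons.prems by auto
    then show ?thesis using Cons.IH True by auto
  next
    case False then show ?thesis by auto
  qed
qed

lemma omega_sign12: "set lam \<subseteq> {1,2} \<Longrightarrow> omega_sign lam = (-1) ^ count_list lam 2"
  by (induction lam) (auto simp: omega_sign_def)

definition phiG :: "nat list \<Rightarrow> nat \<Rightarrow> rat" where
  "phiG lam n = 4 * Gc lam 2 (n - 4) - 4 * Gc lam 1 (n - 2) + Gc lam 0 n"

lemma phiG_odd:
  assumes n: "4 \<le> n" and odd: "\<forall>r\<in>set lam. odd r"
  shows "phiG lam n = 0"
proof (cases "set lam \<subseteq> {1,2}")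
  case True
  have "2 \<notin> set lam" using odd by auto
  then have a: "count_list lam 2 = 0" by (simp add: count_list_0_iff)
  have n4: "n - 4 + 4 = n" "n - 2 + 2 = n" using n by auto
  show ?thesis unfolding phiG_def G0[OF True] G1[OF True] G2[OF True] a n4 by simp
next
  case False then show ?thesis by (simp add: phiG_def Gc_out)
qed

lemma phiG_sign:
  assumes n: "4 \<le> n"
  shows "omega_sign lam * phiG lam n = phiG lam n"
proof (cases "set lam \<subseteq> {1,2}")
  case True
  show ?thesis
  proof (cases "even (count_list lam 2)")
    case True
    then show ?thesis using omega_sign12[OF \<open>set lam \<subseteq> {1,2}\<close>] by simp
  next
    case False
    have n4: "n - 4 + 4 = n" "n - 2 + 2 = n" "n - 4 + 2 = n - 2" using n by auto
    have c0: "count_list lam 2 \<noteq> 0" using False by (metis even_zero)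
    have c2: "count_list lam 2 \<noteq> 2" using False by auto
    have "phiG lam n = 0"
      using c0 c2 unfolding phiG_def G0[OF True] G1[OF True] G2[OF True] n4 by auto
    then show ?thesis by simp
  qed
next
  case False then show ?thesis by (simp add: phiG_def Gc_out)
qed

definition phi :: "nat \<Rightarrow> fps_q \<Rightarrow> rat" where
  "phi n f = 4 * f (al1 n) - 4 * f (al2 n) + f (al3 n)"

lemma phi_sum: "phi n (\<lambda>\<alpha>. \<Sum>lam\<in>L. c lam * g lam \<alpha>) = (\<Sum>lam\<in>L. c lam * phi n (g lam))"
  by (simp add: phi_def sum.distrib sum_subtractf sum_distrib_left algebra_simps)

lemma cnts:
  assumes "4 \<le> n"
  shows "cnt (al1 n) 2 = 2" "cnt (al1 n) 1 = n - 4" "cnt (al2 n) 2 = 1" "cnt (al2 n) 1 = n - 2"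
    "cnt (al3 n) 2 = 0" "cnt (al3 n) 1 = n"
proof -
  have "{i. Poly_Mapping.lookup (al1 n) i = 2} = {0, 2}" by (auto simp: lk1)
  then show "cnt (al1 n) 2 = 2" by (simp add: cnt_def)
  have "{i. Poly_Mapping.lookup (al1 n) i = 1} = {4..<n}" by (auto simp: lk1)
  then show "cnt (al1 n) 1 = n - 4" by (simp add: cnt_def)
  have "{i. Poly_Mapping.lookup (al2 n) i = 2} = {0}" by (auto simp: lk2)
  then show "cnt (al2 n) 2 = 1" by (simp add: cnt_def)
  have "{i. Poly_Mapping.lookup (al2 n) i = 1} = {2..<n}" by (auto simp: lk2)
  then show "cnt (al2 n) 1 = n - 2" by (simp add: cnt_def)
  have "{i. Poly_Mapping.lookup (al3 n) i = 2} = {}" by (auto simp: lk3)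
  then show "cnt (al3 n) 2 = 0" by (simp add: cnt_def)
  have "{i. Poly_Mapping.lookup (al3 n) i = 1} = {..<n}" by (auto simp: lk3)
  then show "cnt (al3 n) 1 = n" by (simp add: cnt_def)
qed

lemma phi_pprod:
  assumes n: "4 \<le> n" and pos: "\<forall>r\<in>set lam. 0 < r"
  shows "phi n (pprod lam) = phiG lam n"
proof -
  have le: "\<forall>i. Poly_Mapping.lookup (al1 n) i \<le> 2" "\<forall>i. Poly_Mapping.lookup (al2 n) i \<le> 2"
    "\<forall>i. Poly_Mapping.lookup (al3 n) i \<le> 2" by (auto simp: lk1 lk2 lk3)
  show ?thesis unfolding phi_def phiG_def
    using pprod_G[OF pos le(1)] pprod_G[OF pos le(2)] pprod_G[OF pos le(3)] cnts[OF n] by simp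
qed

lemma no_disjoint:
  assumes sg: "simple_graph V E" and G: "in_Gamma (near_chrom_sym V E)"
  shows "\<nexists>v1 v2 v3 v4. disjoint_edges E v1 v2 v3 v4"
proof
  assume "\<exists>v1 v2 v3 v4. disjoint_edges E v1 v2 v3 v4"
  then obtain v1 v2 v3 v4 where d: "disjoint_edges E v1 v2 v3 v4" by blast
  have fin: "finite V" and inV: "\<And>x y. E x y \<Longrightarrow> x \<in> V \<and> y \<in> V"
    using sg unfolding simple_graph_def by blast+
  define n where "n = card V"
  have e: "E v1 v2" "E v3 v4" and ds: "distinct [v1, v2, v3, v4]" using d unfolding disjoint_edges_def by auto
  have Q: "{v1, v2, v3, v4} \<subseteq> V" using inV e by auto
  have n4: "4 \<le> n" using card_mono[OF fin Q] ds unfolding n_def by simp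
  let ?X = "chrom_sym V E"
  \<comment> \<open>phi vanishes on Gamma\<close>
  obtain L' c' where L': "finite L'" "\<forall>lam\<in>L'. \<forall>r\<in>set lam. odd r"
    "near_chrom_sym V E = (\<lambda>\<alpha>. \<Sum>lam\<in>L'. c' lam * pprod lam \<alpha>)"
    using G unfolding in_Gamma_def by blast
  have "phi n (near_chrom_sym V E) = (\<Sum>lam\<in>L'. c' lam * phi n (pprod lam))"
    unfolding L'(3) by (rule phi_sum)
  also have "\<dots> = 0"
  proof (rule sum.neutral, rule ballI)
    fix lam assume lam: "lam \<in> L'"
    have "\<forall>r\<in>set lam. 0 < r" using L'(2) lam by (metis odd_pos)
    then show "c' lam * phi n (pprod lam) = 0"
      using phi_pprod[OF n4] phiG_odd[OF n4] L'(2) lam by simp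
  qed
  finally have phiY: "phi n (near_chrom_sym V E) = 0" .
  \<comment> \<open>phi commutes with omega on X\<close>
  have ex: "\<exists>g. \<exists>L c. finite L \<and> (\<forall>lam\<in>L. \<forall>r\<in>set lam. 0 < r) \<and>
      ?X = (\<lambda>\<alpha>. \<Sum>lam\<in>L. c lam * pprod lam \<alpha>) \<and>
      g = (\<lambda>\<alpha>. \<Sum>lam\<in>L. c lam * omega_sign lam * pprod lam \<alpha>)"
    using rep_chrom[OF sg] unfolding rep_def by blast
  obtain L c where Lc: "finite L" "\<forall>lam\<in>L. \<forall>r\<in>set lam. 0 < r"
      "?X = (\<lambda>\<alpha>. \<Sum>lam\<in>L. c lam * pprod lam \<alpha>)"
      "omega ?X = (\<lambda>\<alpha>. \<Sum>lam\<in>L. c lam * omega_sign lam * pprod lam \<alpha>)"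
    using someI_ex[OF ex] unfolding omega_def by blast
  have "phi n (omega ?X) = (\<Sum>lam\<in>L. (c lam * omega_sign lam) * phi n (pprod lam))"
    unfolding Lc(4) by (rule phi_sum)
  also have "\<dots> = (\<Sum>lam\<in>L. c lam * phi n (pprod lam))"
  proof (rule sum.cong[OF refl])
    fix lam assume "lam \<in> L"
    then have "phi n (pprod lam) = phiG lam n" using phi_pprod[OF n4] Lc(2) by blast
    then show "c lam * omega_sign lam * phi n (pprod lam) = c lam * phi n (pprod lam)"
      using phiG_sign[OF n4, of lam] by (simp add: mult.assoc)
  qed
  also have "\<dots> = phi n ?X" unfolding Lc(3) by (rule phi_sum[symmetric])
  finally have om: "phi n (omega ?X) = phi n ?X" .
  have "phi n (near_chrom_sym V E) = (phi n ?X + phi n (omega ?X)) / 2"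
    by (simp add: phi_def near_chrom_sym_def field_simps)
  then have "phi n ?X = 0" using om phiY by simp
  \<comment> \<open>but phi X is positive\<close>
  moreover have "phi n ?X = of_int (int (card {\<beta>\<in>Acol V (al3 n). eab E 0 1 \<beta> \<and> eab E 2 3 \<beta>}))"
  proof -
    have "phi n ?X = of_int (4 * int (card {\<kappa>\<in>Acol V (al1 n). prp E \<kappa>}) - 4 * int (card {\<kappa>\<in>Acol V (al2 n). prp E \<kappa>})
     + int (card {\<kappa>\<in>Acol V (al3 n). prp E \<kappa>}))"
      unfolding phi_def chrom_eq prp_def by simp
    then show ?thesis using phiX[OF sg n_def[symmetric] n4] by simp
  qed
  moreover have "card {\<beta>\<in>Acol V (al3 n). eab E 0 1 \<beta> \<and> eab E 2 3 \<beta>} \<noteq> 0"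
    using exists_both[OF sg d n_def[symmetric]] finite_Acol[OF fin] by (auto simp: card_eq_0_iff)
  ultimately show False by simp
qed

theorem mainTheorem3:
  fixes V :: "'a set" and E :: "'a \<Rightarrow> 'a \<Rightarrow> bool"
  assumes "simple_graph V E"
    and "in_Gamma (near_chrom_sym V E)"
  shows "(\<nexists>v1 v2 v3 v4. disjoint_edges E v1 v2 v3 v4)
    \<and> (graph_connected V E \<longrightarrow>
         graph_iso V E {0::nat, 1, 2} C3_edges \<or>
         (\<exists>n::nat. n \<ge> 1 \<and> graph_iso V E {0..<n} (star_edges n)))"
  using no_disjoint[OF assms] graph_part[OF assms(1)] by blast


end
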